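(* The operator $A_p:\mathcal X_p(\Omega)\to\mathcal X_p(\Omega)^*$ defined by $(A_pu,v):=\int_{[0,1]}\langle u,v\rangle_s\,d\mu^+(s)$ is continuous.
   Context: $p\in(1,N)$, $\Omega\subset\mathbb{R}^N$ bounded open, $\mu^+$ a finite Borel measure on $[0,1]$ with $\mu^+([\overline s,1])>0$ for some $\overline s\in(0,1]$. $c_{N,s,p}:=\frac{s\,2^{2s-1}\Gamma\left(\frac{ps+p+N-2}{2}\right)}{\pi^{N/2}\Gamma(1-s)}$; $[u]_{0,p}:=\|u\|_{L^p}$, $[u]_{s,p}:=\left(c_{N,s,p}\iint_{\mathbb{R}^{2N}}\frac{|u(x)-u(y)|^p}{|x-y|^{N+sp}}dxdy\right)^{1/p}$ for $s\in(0,1)$, $[u]_{1,p}:=\|\nabla u\|_{L^p}$. $\rho_p(u):=\left(\int_{[0,1]}[u]_{s,p}^pd\mu^+(s)\right)^{1/p}$; $\mathcal X_p(\Omega)$ is the space of measurable $u$ vanishing a.e. outside $\Omega$ with $\rho_p(u)<\infty$, normed by $\rho_p$, and $\mathcal X_p(\Omega)^*$ its dual. For $s\in(0,1)$, $\langle u,v\rangle_s:=c_{N,s,p}\iint_{\mathbb{R}^{2N}}\frac{|u(x)-u(y)|^{p-2}(u(x)-u(y))(v(x)-v(y))}{|x-y|^{N+sp}}dxdy$; $\langle u,v\rangle_0:=\int|u|^{p-2}uv$; $\langle u,v\rangle_1:=\int|\nabla u|^{p-2}\nabla u\cdot\nabla v$. *)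

theory Defs
  imports "HOL-Analysis.Analysis"
begin

text \<open>Functions on R^N are modelled as u :: 'a \<Rightarrow> real with 'a :: euclidean_space, N = DIM('a).\<close>

definition cNsp :: "nat \<Rightarrow> real \<Rightarrow> real \<Rightarrow> real" where
  "cNsp N s p = s * 2 powr (2 * s - 1) * Gamma ((p * s + p + real N - 2) / 2)
      / (pi powr (real N / 2) * Gamma (1 - s))"

definition has_weak_grad :: "('a::euclidean_space \<Rightarrow> real) \<Rightarrow> ('a \<Rightarrow> 'a) \<Rightarrow> bool" where
  "has_weak_grad u g \<longleftrightarrow>
     g \<in> borel_measurable lborel \<and>
     (\<forall>K. compact K \<longrightarrow> set_integrable lborel K (\<lambda>x. norm (g x)) \<and> set_integrable lborel K u) \<and>
     (\<forall>\<phi> \<phi>'. (\<forall>x. (\<phi> has_derivative \<phi>' x) (at x)) \<and> continuous_on UNIV \<phi>' \<and>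
              compact (closure {x. \<phi> x \<noteq> 0}) \<longrightarrow>
        (\<forall>b\<in>Basis. (\<integral>x. u x * \<phi>' x b \<partial>lborel) = - (\<integral>x. \<phi> x * (g x \<bullet> b) \<partial>lborel)))"

definition wgrad :: "('a::euclidean_space \<Rightarrow> real) \<Rightarrow> ('a \<Rightarrow> 'a)" where
  "wgrad u = (SOME g. has_weak_grad u g)"

definition seminorm_pow :: "real \<Rightarrow> real \<Rightarrow> ('a::euclidean_space \<Rightarrow> real) \<Rightarrow> ennreal" where
  "seminorm_pow p s u =
    (if s = 0 then (\<integral>\<^sup>+ x. ennreal (\<bar>u x\<bar> powr p) \<partial>lborel)
     else if s = 1 then
       (if \<exists>g. has_weak_grad u g then (\<integral>\<^sup>+ x. ennreal (norm (wgrad u x) powr p) \<partial>lborel) else \<infinity>)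
     else ennreal (cNsp DIM('a) s p) *
       (\<integral>\<^sup>+ z. ennreal (\<bar>u (fst z) - u (snd z)\<bar> powr p
                       / norm (fst z - snd z) powr (real DIM('a) + s * p)) \<partial>(lborel \<Otimes>\<^sub>M lborel)))"

definition rho_pow :: "real measure \<Rightarrow> real \<Rightarrow> ('a::euclidean_space \<Rightarrow> real) \<Rightarrow> ennreal" where
  "rho_pow mu p u = (\<integral>\<^sup>+ s. seminorm_pow p s u \<partial>mu)"

definition rho :: "real measure \<Rightarrow> real \<Rightarrow> ('a::euclidean_space \<Rightarrow> real) \<Rightarrow> real" where
  "rho mu p u = (enn2real (rho_pow mu p u)) powr (1 / p)"

definition Xp :: "real measure \<Rightarrow> real \<Rightarrow> 'a::euclidean_space set \<Rightarrow> ('a \<Rightarrow> real) set" where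
  "Xp mu p \<Omega> = {u. u \<in> borel_measurable lborel \<and> (AE x in lborel. x \<notin> \<Omega> \<longrightarrow> u x = 0)
                   \<and> rho_pow mu p u < \<infinity>}"

definition pairing :: "real \<Rightarrow> real \<Rightarrow> ('a::euclidean_space \<Rightarrow> real) \<Rightarrow> ('a \<Rightarrow> real) \<Rightarrow> real" where
  "pairing p s u v =
    (if s = 0 then (\<integral>x. \<bar>u x\<bar> powr (p - 2) * u x * v x \<partial>lborel)
     else if s = 1 then
       (\<integral>x. norm (wgrad u x) powr (p - 2) * (wgrad u x \<bullet> wgrad v x) \<partial>lborel)
     else cNsp DIM('a) s p *
       (\<integral>z. \<bar>u (fst z) - u (snd z)\<bar> powr (p - 2) * (u (fst z) - u (snd z)) * (v (fst z) - v (snd z))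
              / norm (fst z - snd z) powr (real DIM('a) + s * p) \<partial>(lborel \<Otimes>\<^sub>M lborel)))"

definition Ap :: "real measure \<Rightarrow> real \<Rightarrow> ('a::euclidean_space \<Rightarrow> real) \<Rightarrow> ('a \<Rightarrow> real) \<Rightarrow> real" where
  "Ap mu p u v = (\<integral>s. pairing p s u v \<partial>mu)"

end

theory Submission
  imports Defs
begin

lemma holder_real:
  fixes f g :: "'x \<Rightarrow> real"
  assumes pq: "1 < p" "1 < q" "1/p + 1/q = 1"
    and fm: "f \<in> borel_measurable M" and gm: "g \<in> borel_measurable M"
    and f0: "\<And>x. 0 \<le> f x" and g0: "\<And>x. 0 \<le> g x"
    and fi: "integrable M (\<lambda>x. f x powr p)" and gi: "integrable M (\<lambda>x. g x powr q)"
  shows "integrable M (\<lambda>x. f x * g x) \<and>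
         (\<integral>x. f x * g x \<partial>M) \<le> (\<integral>x. f x powr p \<partial>M) powr (1/p) * (\<integral>x. g x powr q \<partial>M) powr (1/q)"
proof -
  define A where "A = (\<integral>x. f x powr p \<partial>M)"
  define B where "B = (\<integral>x. g x powr q \<partial>M)"
  have A0: "A \<ge> 0" unfolding A_def by (intro integral_nonneg_AE) auto
  have B0: "B \<ge> 0" unfolding B_def by (intro integral_nonneg_AE) auto
  have Y: "f x * g x \<le> f x powr p / p + g x powr q / q" for x
    using Youngs_inequality[OF pq f0 g0] .
  have int: "integrable M (\<lambda>x. f x * g x)"
  proof (rule Bochner_Integration.integrable_bound[of _ "\<lambda>x. f x powr p / p + g x powr q / q"])
    show "integrable M (\<lambda>x. f x powr p / p + g x powr q / q)" using fi gi by auto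
    show "(\<lambda>x. f x * g x) \<in> borel_measurable M" using fm gm by auto
    show "AE x in M. norm (f x * g x) \<le> norm (f x powr p / p + g x powr q / q)"
      using Y f0 g0 pq by (auto intro!: always_eventually simp: abs_mult)
  qed
  have I0: "(\<integral>x. f x * g x \<partial>M) \<ge> 0" by (intro integral_nonneg_AE) (auto simp: f0 g0)
  show ?thesis
  proof (cases "A = 0 \<or> B = 0")
    case True
    have "AE x in M. f x * g x = 0"
    proof (cases "A = 0")
      case True
      then have "AE x in M. f x powr p = 0" using fi unfolding A_def
        by (subst (asm) integral_nonneg_eq_0_iff_AE) auto
      then show ?thesis by eventually_elim auto
    next
      case False
      then have "B = 0" using \<open>A = 0 \<or> B = 0\<close> by auto
      then have "AE x in M. g x powr q = 0" using gi unfolding B_def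
        by (subst (asm) integral_nonneg_eq_0_iff_AE) auto
      then show ?thesis by eventually_elim auto
    qed
    then have "(\<integral>x. f x * g x \<partial>M) = 0"
      using integral_nonneg_eq_0_iff_AE[OF int] f0 g0 by auto
    then show ?thesis using int A0 B0 by (simp add: A_def[symmetric] B_def[symmetric])
  next
    case False
    then have Ap: "A > 0" and Bp: "B > 0" using A0 B0 by auto
    define a where "a = A powr (1/p)"
    define b where "b = B powr (1/q)"
    have ap: "a > 0" "b > 0" using Ap Bp by (auto simp: a_def b_def)
    have apA: "a powr p = A" using Ap pq by (simp add: a_def powr_powr)
    have bqB: "b powr q = B" using Bp pq by (simp add: b_def powr_powr)
    have Y2: "(f x / a) * (g x / b) \<le> f x powr p / (p * A) + g x powr q / (q * B)" for x
    proof -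
      have "(f x / a) * (g x / b) \<le> (f x / a) powr p / p + (g x / b) powr q / q"
        using Youngs_inequality[OF pq, of "f x / a" "g x / b"] f0 g0 ap by auto
      also have "\<dots> = f x powr p / (p * A) + g x powr q / (q * B)"
        using f0 g0 ap by (simp add: powr_divide apA bqB mult.commute)
      finally show ?thesis .
    qed
    have "(\<integral>x. (f x / a) * (g x / b) \<partial>M) \<le> (\<integral>x. f x powr p / (p * A) + g x powr q / (q * B) \<partial>M)"
      using int fi gi Y2 by (intro integral_mono) auto
    also have "\<dots> = A / (p * A) + B / (q * B)"
      using fi gi by (simp add: A_def B_def)
    also have "\<dots> = 1" using Ap Bp pq by simp
    finally have "(\<integral>x. f x * g x \<partial>M) / (a * b) \<le> 1"
      by (simp add: field_simps)
    then have "(\<integral>x. f x * g x \<partial>M) \<le> a * b" using ap by (simp add: field_simps)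
    then show ?thesis using int by (simp add: a_def b_def A_def B_def)
  qed
qed

lemma powr_mult_self: "0 < (x::real) \<Longrightarrow> x powr a * x = x powr (a + 1)"
  by (simp add: powr_add)

definition Phi :: "real \<Rightarrow> 'b::real_normed_vector \<Rightarrow> 'b" where
  "Phi p a = norm a powr (p - 2) *\<^sub>R a"

lemma norm_Phi: "1 < p \<Longrightarrow> norm (Phi p a) = norm a powr (p - 1)"
proof (cases "a = 0")
  case False
  assume p: "1 < p"
  have "norm (Phi p a) = norm a powr (p - 2) * norm a" by (simp add: Phi_def)
  also have "\<dots> = norm a powr (p - 1)" using False by (simp add: powr_mult_self)
  finally show ?thesis .
qed (simp add: Phi_def)

lemma Phi_scale: "0 < t \<Longrightarrow> Phi p (t *\<^sub>R a) = t powr (p - 1) *\<^sub>R Phi p a"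
proof (cases "a = 0")
  case False
  assume t: "0 < t"
  have "Phi p (t *\<^sub>R a) = (t powr (p - 2) * norm a powr (p - 2) * t) *\<^sub>R a"
    using t by (simp add: Phi_def powr_mult abs_of_pos)
  also have "t powr (p - 2) * norm a powr (p - 2) * t = t powr (p - 1) * norm a powr (p - 2)"
    using t powr_mult_self[OF t, of "p - 2"] by (simp add: mult_ac)
  finally show ?thesis by (simp add: Phi_def)
qed (simp add: Phi_def)

lemma continuous_on_Phi:
  assumes p: "1 < p"
  shows "continuous_on UNIV (Phi p :: 'b::real_normed_vector \<Rightarrow> 'b)"
proof -
  have "isCont (Phi p) a" for a :: 'b
  proof (cases "a = 0")
    case False
    then show ?thesis unfolding Phi_def
      by (intro continuous_intros) auto
  next
    case True
    have "((\<lambda>x. norm (Phi p x)) \<longlongrightarrow> 0) (at (0::'b))"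
      unfolding norm_Phi[OF p]
      by (rule tendsto_zero_powrI) (auto intro!: tendsto_eq_intros simp: p)
    then have "(Phi p \<longlongrightarrow> 0) (at (0::'b))"
      by (rule tendsto_norm_zero_cancel)
    then show ?thesis using True by (simp add: isCont_def Phi_def)
  qed
  then show ?thesis by (simp add: continuous_at_imp_continuous_on)
qed

lemma powr_le_one_aux: "\<lbrakk>(x::real) \<le> 1; 0 \<le> x; 1 < p\<rbrakk> \<Longrightarrow> x powr (p - 1) \<le> 1"
  by (smt (verit, del_insts) powr_mono2 powr_one_eq_one)

lemma Phi_zero[simp]: "Phi p 0 = 0" by (simp add: Phi_def)

lemma Phi_diff_ineq:
  assumes p: "1 < p" and eta: "0 < \<eta>"
  shows "\<exists>C\<ge>0. \<forall>a b::'b::euclidean_space. norm (Phi p a - Phi p b) powr (p / (p - 1))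
            \<le> C * norm (a - b) powr p + \<eta> * (norm a powr p + norm b powr p)"
proof -
  define q where "q = p / (p - 1)"
  have q1: "1 < q" using p by (simp add: q_def field_simps)
  have pq: "(p - 1) * q = p" using p by (simp add: q_def field_simps)
  define \<epsilon> where "\<epsilon> = \<eta> powr (1 / q)"
  have epos: "0 < \<epsilon>" using eta by (simp add: \<epsilon>_def)
  have eq: "\<epsilon> powr q = \<eta>" using eta q1 by (simp add: \<epsilon>_def powr_powr)
  have "uniformly_continuous_on (cball (0::'b) 1) (Phi p)"
    by (rule compact_uniformly_continuous) (auto intro: continuous_on_subset[OF continuous_on_Phi[OF p]])
  then obtain \<delta> where dpos: "\<delta> > 0" and dU: "\<And>x x'. x \<in> cball (0::'b) 1 \<Longrightarrow> x' \<in> cball 0 1 \<Longrightarrow>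
      dist x' x < \<delta> \<Longrightarrow> dist (Phi p x') (Phi p x) < \<epsilon>"
    unfolding uniformly_continuous_on_def using epos by metis
  define C where "C = 2 powr q / \<delta> powr p"
  have C0: "C \<ge> 0" by (simp add: C_def)
  have main: "norm (Phi p a - Phi p b) powr q \<le> C * norm (a - b) powr p + \<eta> * (norm a powr p + norm b powr p)"
    for a b :: 'b
  proof (cases "a = 0 \<and> b = 0")
    case True then show ?thesis using C0 eta by simp
  next
    case False
    define r where "r = max (norm a) (norm b)"
    have rpos: "r > 0" using False by (auto simp: r_def max_def)
    define a' where "a' = (1 / r) *\<^sub>R a"
    define b' where "b' = (1 / r) *\<^sub>R b"
    have a'c: "a' \<in> cball 0 1" using rpos by (simp add: a'_def r_def field_simps)
    have b'c: "b' \<in> cball 0 1" using rpos by (simp add: b'_def r_def field_simps)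
    have aa: "a = r *\<^sub>R a'" "b = r *\<^sub>R b'" using rpos by (auto simp: a'_def b'_def)
    define D where "D = norm (Phi p a' - Phi p b')"
    have D0: "D \<ge> 0" by (simp add: D_def)
    have "Phi p a - Phi p b = r powr (p - 1) *\<^sub>R (Phi p a' - Phi p b')"
      using rpos by (simp add: aa Phi_scale scaleR_diff_right)
    then have "norm (Phi p a - Phi p b) = r powr (p - 1) * D"
      by (simp add: D_def)
    then have L: "norm (Phi p a - Phi p b) powr q = r powr p * D powr q"
      using rpos D0 by (simp add: powr_mult powr_powr pq)
    have rp: "r powr p \<le> norm a powr p + norm b powr p"
      by (auto simp: r_def max_def)
    show ?thesis
    proof (cases "dist b' a' < \<delta>")
      case True
      then have "dist (Phi p b') (Phi p a') < \<epsilon>" using dU a'c b'c by blast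
      then have "D < \<epsilon>" by (simp add: D_def dist_norm norm_minus_commute)
      then have "D powr q \<le> \<eta>" using D0 q1 eq by (metis less_eq_real_def powr_mono2 zero_le_one less_trans zero_less_one)
      then have "norm (Phi p a - Phi p b) powr q \<le> r powr p * \<eta>"
        unfolding L by (intro mult_left_mono) auto
      also have "\<dots> \<le> \<eta> * (norm a powr p + norm b powr p)"
        using rp eta by (simp add: mult.commute)
      finally show ?thesis using C0 by (smt (verit) mult_nonneg_nonneg powr_ge_zero)
    next
      case False
      have "D \<le> norm (Phi p a') + norm (Phi p b')" unfolding D_def by (rule norm_triangle_ineq4)
      also have "\<dots> = norm a' powr (p - 1) + norm b' powr (p - 1)" using p by (simp add: norm_Phi)
      also have "\<dots> \<le> 1 + 1"
        using a'c b'c p by (intro add_mono) (auto intro!: powr_le_one_aux)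
      finally have D2: "D \<le> 2" by simp
      have "D powr q \<le> 2 powr q" using D2 D0 q1 by (intro powr_mono2) auto
      have nab: "norm (a - b) = r * dist b' a'"
        using rpos by (simp add: aa dist_norm norm_minus_commute scaleR_diff_right[symmetric])
      have "r * \<delta> \<le> norm (a - b)" using False rpos unfolding nab by (intro mult_left_mono) auto
      then have "r \<le> norm (a - b) / \<delta>" using dpos by (simp add: field_simps)
      then have "r powr p \<le> (norm (a - b) / \<delta>) powr p" using rpos p by (intro powr_mono2) auto
      also have "\<dots> = norm (a - b) powr p / \<delta> powr p" using dpos by (simp add: powr_divide)
      finally have rr: "r powr p \<le> norm (a - b) powr p / \<delta> powr p" .
      have "norm (Phi p a - Phi p b) powr q \<le> (norm (a - b) powr p / \<delta> powr p) * 2 powr q"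
        unfolding L using rr \<open>D powr q \<le> 2 powr q\<close> by (intro mult_mono) auto
      also have "\<dots> = C * norm (a - b) powr p" by (simp add: C_def)
      finally show ?thesis using eta by (smt (verit) mult_nonneg_nonneg powr_ge_zero)
    qed
  qed
  then show ?thesis using C0 unfolding q_def by blast
qed

lemma Phi_measurable[measurable]:
  assumes "1 < p" "f \<in> borel_measurable M"
  shows "(\<lambda>x. Phi p (f x :: 'b::euclidean_space)) \<in> borel_measurable M"
  using borel_measurable_continuous_on[OF continuous_on_Phi[OF assms(1)] assms(2)] .

lemma norm_add_powr:
  fixes x y :: "'b::real_normed_vector"
  assumes "0 \<le> p"
  shows "norm (x + y) powr p \<le> 2 powr p * (norm x powr p + norm y powr p)"
proof -
  have "norm (x + y) \<le> 2 * max (norm x) (norm y)"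
    using norm_triangle_ineq[of x y] by linarith
  then have "norm (x + y) powr p \<le> (2 * max (norm x) (norm y)) powr p"
    using assms by (intro powr_mono2) auto
  also have "\<dots> = 2 powr p * max (norm x) (norm y) powr p" by (simp add: powr_mult)
  also have "\<dots> \<le> 2 powr p * (norm x powr p + norm y powr p)"
    by (intro mult_left_mono) (auto simp: max_def)
  finally show ?thesis .
qed

lemma integrable_norm_powr_lin:
  fixes f g :: "'x \<Rightarrow> 'b::euclidean_space"
  assumes p: "0 \<le> p" and fm: "f \<in> borel_measurable M" and gm: "g \<in> borel_measurable M"
    and fi: "integrable M (\<lambda>x. norm (f x) powr p)" and gi: "integrable M (\<lambda>x. norm (g x) powr p)"
  shows "integrable M (\<lambda>x. norm (a *\<^sub>R f x + b *\<^sub>R g x) powr p)"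
proof (rule Bochner_Integration.integrable_bound[of _
     "\<lambda>x. 2 powr p * (\<bar>a\<bar> powr p * norm (f x) powr p + \<bar>b\<bar> powr p * norm (g x) powr p)"])
  show "integrable M (\<lambda>x. 2 powr p * (\<bar>a\<bar> powr p * norm (f x) powr p + \<bar>b\<bar> powr p * norm (g x) powr p))"
    using fi gi by auto
  show "(\<lambda>x. norm (a *\<^sub>R f x + b *\<^sub>R g x) powr p) \<in> borel_measurable M" using fm gm by measurable
  show "AE x in M. norm (norm (a *\<^sub>R f x + b *\<^sub>R g x) powr p)
      \<le> norm (2 powr p * (\<bar>a\<bar> powr p * norm (f x) powr p + \<bar>b\<bar> powr p * norm (g x) powr p))"
  proof (intro always_eventually allI)
    fix x
    have "norm (a *\<^sub>R f x + b *\<^sub>R g x) powr p \<le> 2 powr p * (norm (a *\<^sub>R f x) powr p + norm (b *\<^sub>R g x) powr p)"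
      by (rule norm_add_powr[OF p])
    also have "\<dots> = 2 powr p * (\<bar>a\<bar> powr p * norm (f x) powr p + \<bar>b\<bar> powr p * norm (g x) powr p)"
      by (simp add: powr_mult)
    finally show "norm (norm (a *\<^sub>R f x + b *\<^sub>R g x) powr p)
      \<le> norm (2 powr p * (\<bar>a\<bar> powr p * norm (f x) powr p + \<bar>b\<bar> powr p * norm (g x) powr p))"
      by simp
  qed
qed

lemma pair_holder:
  fixes f g :: "'x \<Rightarrow> 'b::euclidean_space"
  assumes p: "1 < p" and fm: "f \<in> borel_measurable M" and gm: "g \<in> borel_measurable M"
    and F: "\<And>x. 0 \<le> F x" and Fm: "F \<in> borel_measurable M"
    and Fb: "\<And>x. norm (f x) \<le> F x"
    and Fi: "integrable M (\<lambda>x. F x powr (p / (p - 1)))" and gi: "integrable M (\<lambda>x. norm (g x) powr p)"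
  shows "integrable M (\<lambda>x. f x \<bullet> g x) \<and>
    \<bar>\<integral>x. f x \<bullet> g x \<partial>M\<bar> \<le> (\<integral>x. F x powr (p / (p - 1)) \<partial>M) powr ((p - 1) / p) * (\<integral>x. norm (g x) powr p \<partial>M) powr (1 / p)"
proof -
  have pq: "1 / (p / (p - 1)) + 1 / p = 1" "1 < p / (p - 1)" using p by (auto simp: field_simps)
  have H: "integrable M (\<lambda>x. F x * norm (g x)) \<and>
     (\<integral>x. F x * norm (g x) \<partial>M) \<le> (\<integral>x. F x powr (p / (p - 1)) \<partial>M) powr (1 / (p / (p - 1))) * (\<integral>x. norm (g x) powr p \<partial>M) powr (1 / p)"
    by (rule holder_real[OF pq(2) p pq(1) Fm _ F _ Fi gi]) (use gm in auto)
  have bd: "\<bar>f x \<bullet> g x\<bar> \<le> F x * norm (g x)" for x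
    using Cauchy_Schwarz_ineq2[of "f x" "g x"] Fb[of x] by (meson mult_right_mono norm_ge_zero order_trans)
  have int: "integrable M (\<lambda>x. f x \<bullet> g x)"
    by (rule Bochner_Integration.integrable_bound[of _ "\<lambda>x. F x * norm (g x)"])
      (use H fm gm bd F in \<open>auto intro!: always_eventually simp: abs_mult\<close>)
  have "\<bar>\<integral>x. f x \<bullet> g x \<partial>M\<bar> \<le> (\<integral>x. \<bar>f x \<bullet> g x\<bar> \<partial>M)" by (rule integral_abs_bound)
  also have "\<dots> \<le> (\<integral>x. F x * norm (g x) \<partial>M)" using int H bd by (intro integral_mono) auto
  also have "\<dots> \<le> (\<integral>x. F x powr (p / (p - 1)) \<partial>M) powr ((p - 1) / p) * (\<integral>x. norm (g x) powr p \<partial>M) powr (1 / p)"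
    using H by simp
  finally show ?thesis using int by simp
qed

lemma pair_bound:
  fixes f g :: "'x \<Rightarrow> 'b::euclidean_space"
  assumes p: "1 < p" and fm: "f \<in> borel_measurable M" and gm: "g \<in> borel_measurable M"
    and fi: "integrable M (\<lambda>x. norm (f x) powr p)" and gi: "integrable M (\<lambda>x. norm (g x) powr p)"
  shows "integrable M (\<lambda>x. Phi p (f x) \<bullet> g x) \<and>
    \<bar>\<integral>x. Phi p (f x) \<bullet> g x \<partial>M\<bar> \<le> (\<integral>x. norm (f x) powr p \<partial>M) powr ((p - 1) / p) * (\<integral>x. norm (g x) powr p \<partial>M) powr (1 / p)"
proof -
  have e: "(norm (f x) powr (p - 1)) powr (p / (p - 1)) = norm (f x) powr p" for x
    using p by (simp add: powr_powr)
  show ?thesis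
    using pair_holder[OF p _ gm, of "\<lambda>x. Phi p (f x)" "\<lambda>x. norm (f x) powr (p - 1)"] p fm fi gi
    by (simp add: e norm_Phi)
qed

lemma pair_diff_bound:
  fixes f1 f g :: "'x \<Rightarrow> 'b::euclidean_space"
  assumes p: "1 < p" and f1m: "f1 \<in> borel_measurable M" and fm: "f \<in> borel_measurable M" and gm: "g \<in> borel_measurable M"
    and f1i: "integrable M (\<lambda>x. norm (f1 x) powr p)"
    and fi: "integrable M (\<lambda>x. norm (f x) powr p)" and gi: "integrable M (\<lambda>x. norm (g x) powr p)"
    and C: "0 \<le> C" "0 \<le> \<eta>"
    and ineq: "\<And>a b::'b. norm (Phi p a - Phi p b) powr (p / (p - 1))
            \<le> C * norm (a - b) powr p + \<eta> * (norm a powr p + norm b powr p)"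
  shows "\<bar>(\<integral>x. Phi p (f1 x) \<bullet> g x \<partial>M) - (\<integral>x. Phi p (f x) \<bullet> g x \<partial>M)\<bar> \<le>
     (C * (\<integral>x. norm (f1 x - f x) powr p \<partial>M) + \<eta> * ((\<integral>x. norm (f1 x) powr p \<partial>M) + (\<integral>x. norm (f x) powr p \<partial>M)))
        powr ((p - 1) / p) * (\<integral>x. norm (g x) powr p \<partial>M) powr (1 / p)"
proof -
  have I1: "integrable M (\<lambda>x. Phi p (f1 x) \<bullet> g x)" using pair_bound[OF p f1m gm f1i gi] by blast
  have I2: "integrable M (\<lambda>x. Phi p (f x) \<bullet> g x)" using pair_bound[OF p fm gm fi gi] by blast
  have dI: "integrable M (\<lambda>x. norm (f1 x - f x) powr p)"
    using integrable_norm_powr_lin[OF _ f1m fm f1i fi, of 1 "-1"] p by simp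
  have Ri: "integrable M (\<lambda>x. C * norm (f1 x - f x) powr p + \<eta> * (norm (f1 x) powr p + norm (f x) powr p))"
    using dI f1i fi by auto
  have Fi: "integrable M (\<lambda>x. norm (Phi p (f1 x) - Phi p (f x)) powr (p / (p - 1)))"
  proof (rule Bochner_Integration.integrable_bound[OF Ri])
    show "(\<lambda>x. norm (Phi p (f1 x) - Phi p (f x)) powr (p / (p - 1))) \<in> borel_measurable M"
      using p f1m fm by measurable
    show "AE x in M. norm (norm (Phi p (f1 x) - Phi p (f x)) powr (p / (p - 1)))
       \<le> norm (C * norm (f1 x - f x) powr p + \<eta> * (norm (f1 x) powr p + norm (f x) powr p))"
      by (intro always_eventually allI, simp only: real_norm_def, rule order_trans[OF _ abs_ge_self])
         (simp add: ineq)
  qed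
  note H = pair_holder[OF p _ gm, of "\<lambda>x. Phi p (f1 x) - Phi p (f x)" "\<lambda>x. norm (Phi p (f1 x) - Phi p (f x))"]
  have "(\<integral>x. Phi p (f1 x) \<bullet> g x \<partial>M) - (\<integral>x. Phi p (f x) \<bullet> g x \<partial>M) = (\<integral>x. (Phi p (f1 x) - Phi p (f x)) \<bullet> g x \<partial>M)"
    using I1 I2 by (simp add: inner_diff_left)
  then have "\<bar>(\<integral>x. Phi p (f1 x) \<bullet> g x \<partial>M) - (\<integral>x. Phi p (f x) \<bullet> g x \<partial>M)\<bar> \<le>
     (\<integral>x. norm (Phi p (f1 x) - Phi p (f x)) powr (p / (p - 1)) \<partial>M) powr ((p - 1) / p) * (\<integral>x. norm (g x) powr p \<partial>M) powr (1 / p)"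
    using H p f1m fm Fi gi by simp
  also have "\<dots> \<le> (C * (\<integral>x. norm (f1 x - f x) powr p \<partial>M) + \<eta> * ((\<integral>x. norm (f1 x) powr p \<partial>M) + (\<integral>x. norm (f x) powr p \<partial>M)))
        powr ((p - 1) / p) * (\<integral>x. norm (g x) powr p \<partial>M) powr (1 / p)"
  proof (intro mult_right_mono powr_mono2)
    have "(\<integral>x. norm (Phi p (f1 x) - Phi p (f x)) powr (p / (p - 1)) \<partial>M) \<le>
       (\<integral>x. C * norm (f1 x - f x) powr p + \<eta> * (norm (f1 x) powr p + norm (f x) powr p) \<partial>M)"
      using Fi Ri ineq by (intro integral_mono) auto
    also have "\<dots> = C * (\<integral>x. norm (f1 x - f x) powr p \<partial>M) + \<eta> * ((\<integral>x. norm (f1 x) powr p \<partial>M) + (\<integral>x. norm (f x) powr p \<partial>M))"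
      using dI f1i fi by simp
    finally show "(\<integral>x. norm (Phi p (f1 x) - Phi p (f x)) powr (p / (p - 1)) \<partial>M) \<le> \<dots>" .
  qed (use p in \<open>auto intro!: integral_nonneg_AE\<close>)
  finally show ?thesis .
qed

lemma pair_linear:
  fixes f g h :: "'x \<Rightarrow> 'b::euclidean_space"
  assumes p: "1 < p" and fm: "f \<in> borel_measurable M" and gm: "g \<in> borel_measurable M" and hm: "h \<in> borel_measurable M"
    and fi: "integrable M (\<lambda>x. norm (f x) powr p)" and gi: "integrable M (\<lambda>x. norm (g x) powr p)"
    and hi: "integrable M (\<lambda>x. norm (h x) powr p)"
  shows "(\<integral>x. Phi p (f x) \<bullet> (a *\<^sub>R g x + b *\<^sub>R h x) \<partial>M) = a * (\<integral>x. Phi p (f x) \<bullet> g x \<partial>M) + b * (\<integral>x. Phi p (f x) \<bullet> h x \<partial>M)"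
proof -
  have I1: "integrable M (\<lambda>x. Phi p (f x) \<bullet> g x)" using pair_bound[OF p fm gm fi gi] by blast
  have I2: "integrable M (\<lambda>x. Phi p (f x) \<bullet> h x)" using pair_bound[OF p fm hm fi hi] by blast
  show ?thesis using I1 I2 by (simp add: inner_add_right)
qed

lemma box_zero_AE:
  fixes r :: "'a::euclidean_space \<Rightarrow> real"
  assumes rm[measurable]: "r \<in> borel_measurable lborel"
    and li: "\<And>a c. integrable lborel (\<lambda>x. indicator (cbox a c) x * \<bar>r x\<bar>)"
    and z: "\<And>a c. (\<integral>x. indicator (box a c) x * r x \<partial>lborel) = 0"
  shows "AE x in lborel. r x = 0"
proof -
  have intb: "integrable lborel (\<lambda>x. indicator (box a c) x * s x)"
    if sm: "s \<in> borel_measurable lborel" and sb: "\<And>x. \<bar>s x\<bar> \<le> \<bar>r x\<bar>" for a c :: 'a and s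
  proof (rule Bochner_Integration.integrable_bound[OF li[of a c]])
    show "(\<lambda>x. indicator (box a c) x * s x) \<in> borel_measurable lborel" using sm by measurable
    show "AE x in lborel. norm (indicator (box a c) x * s x) \<le> norm (indicator (cbox a c) x * \<bar>r x\<bar>)"
      using box_subset_cbox[of a c] sb by (intro always_eventually) (auto simp: indicator_def)
  qed
  have Bk: "AE x in lborel. x \<in> box (- (real k *\<^sub>R One)) (real k *\<^sub>R One) \<longrightarrow> r x = 0" for k :: nat
  proof -
    define B :: "'a set" where "B = box (- (real k *\<^sub>R One)) (real k *\<^sub>R One)"
    define fp where "fp x = ennreal (indicator B x * max 0 (r x))" for x
    define fm where "fm x = ennreal (indicator B x * max 0 (- r x))" for x
    have [measurable]: "fp \<in> borel_measurable lborel" "fm \<in> borel_measurable lborel"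
      unfolding fp_def fm_def B_def by measurable
    have ip: "integrable lborel (\<lambda>x. indicator X x * max 0 (r x))" if "X = box a c" for X a c
      using intb[of "\<lambda>x. max 0 (r x)" a c] that by auto
    have im: "integrable lborel (\<lambda>x. indicator X x * max 0 (- r x))" if "X = box a c" for X a c
      using intb[of "\<lambda>x. max 0 (- r x)" a c] that by auto
    have BX: "\<exists>a c. B \<inter> X = box a c" if "X \<in> range (\<lambda>(a, b). box a b)" for X
      using that unfolding B_def by (auto simp only: box_Int_box) blast
    have eqX: "(\<integral>\<^sup>+ x. fp x * indicator X x \<partial>lborel) = (\<integral>\<^sup>+ x. fm x * indicator X x \<partial>lborel)"
      if X: "X \<in> range (\<lambda>(a, b). box a b)" for X
    proof -
      obtain a c where ac: "B \<inter> X = box a c" using BX[OF X] by blast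
      have e1: "(\<integral>\<^sup>+ x. fp x * indicator X x \<partial>lborel) = (\<integral>\<^sup>+ x. ennreal (indicator (B \<inter> X) x * max 0 (r x)) \<partial>lborel)"
        by (intro nn_integral_cong) (auto simp: fp_def indicator_def)
      have e2: "(\<integral>\<^sup>+ x. fm x * indicator X x \<partial>lborel) = (\<integral>\<^sup>+ x. ennreal (indicator (B \<inter> X) x * max 0 (- r x)) \<partial>lborel)"
        by (intro nn_integral_cong) (auto simp: fm_def indicator_def)
      have "(\<integral>x. indicator (B \<inter> X) x * max 0 (r x) \<partial>lborel) - (\<integral>x. indicator (B \<inter> X) x * max 0 (- r x) \<partial>lborel)
          = (\<integral>x. indicator (B \<inter> X) x * r x \<partial>lborel)"
      proof -
        have "(\<integral>x. indicator (B \<inter> X) x * max 0 (r x) \<partial>lborel) - (\<integral>x. indicator (B \<inter> X) x * max 0 (- r x) \<partial>lborel)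
           = (\<integral>x. indicator (B \<inter> X) x * max 0 (r x) - indicator (B \<inter> X) x * max 0 (- r x) \<partial>lborel)"
          using ip[OF ac] im[OF ac] by (rule Bochner_Integration.integral_diff[symmetric])
        also have "\<dots> = (\<integral>x. indicator (B \<inter> X) x * r x \<partial>lborel)"
          by (rule Bochner_Integration.integral_cong) (auto simp: max_def indicator_def)
        finally show ?thesis .
      qed
      also have "\<dots> = 0" using z[of a c] ac by simp
      finally have "(\<integral>x. indicator (B \<inter> X) x * max 0 (r x) \<partial>lborel) = (\<integral>x. indicator (B \<inter> X) x * max 0 (- r x) \<partial>lborel)"
        by simp
      then show ?thesis unfolding e1 e2
        using ip[OF ac] im[OF ac] by (subst (1 2) nn_integral_eq_integral) auto
    qed
    have fin: "integral\<^sup>N lborel fp \<noteq> \<infinity>"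
    proof -
      have "integral\<^sup>N lborel fp = ennreal (\<integral>x. indicator B x * max 0 (r x) \<partial>lborel)"
        unfolding fp_def using ip[of B] by (intro nn_integral_eq_integral) (auto simp: B_def)
      then show ?thesis by simp
    qed
    have "density lborel fp = density lborel fm"
    proof (rule measure_eqI_generator_eq)
      let ?E = "range (\<lambda>(a, b). box a b::'a set)"
      show "Int_stable ?E" by (auto simp: Int_stable_def box_Int_box)
      show "?E \<subseteq> Pow UNIV" "sets (density lborel fp) = sigma_sets UNIV ?E" "sets (density lborel fm) = sigma_sets UNIV ?E"
        by (simp_all add: borel_eq_box)
      let ?A = "\<lambda>n::nat. box (- (real n *\<^sub>R One)) (real n *\<^sub>R One) :: 'a set"
      show "range ?A \<subseteq> ?E" "(\<Union>i. ?A i) = UNIV"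
        unfolding UN_box_eq_UNIV by auto
      show "emeasure (density lborel fp) (?A i) \<noteq> \<infinity>" for i
      proof -
        have "emeasure (density lborel fp) (?A i) \<le> emeasure (density lborel fp) UNIV"
          by (intro emeasure_mono) auto
        also have "\<dots> = integral\<^sup>N lborel fp" by (simp add: emeasure_density)
        finally show ?thesis using fin by (auto simp: top_unique)
      qed
      show "emeasure (density lborel fp) X = emeasure (density lborel fm) X" if "X \<in> ?E" for X
        using eqX[OF that] that by (subst (1 2) emeasure_density) auto
    qed
    then have "AE x in lborel. fp x = fm x"
      using finite_density_unique[of fp lborel fm] fin by auto
    then show ?thesis
      by eventually_elim (auto simp: fp_def fm_def B_def indicator_def max_def split: if_splits)
  qed
  then have "AE x in lborel. \<forall>k::nat. x \<in> box (- (real k *\<^sub>R One)) (real k *\<^sub>R One) \<longrightarrow> r x = 0"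
    by (subst AE_all_countable) (use Bk in blast)
  then show ?thesis
  proof eventually_elim
    case (elim x)
    have "x \<in> (\<Union>k::nat. box (- (real k *\<^sub>R One)) (real k *\<^sub>R One))" unfolding UN_box_eq_UNIV by simp
    then show ?case using elim by blast
  qed
qed

definition sqp :: "real \<Rightarrow> real" where "sqp t = (max 0 t)^2"

lemma DERIV_sqp: "DERIV sqp t :> 2 * max 0 t"
proof -
  consider "t > 0" | "t < 0" | "t = 0" by linarith
  then show ?thesis
  proof cases
    case 1
    have "DERIV (\<lambda>t. t^2) t :> 2 * max 0 t" using 1 by (auto intro!: derivative_eq_intros)
    then show ?thesis
      by (rule has_field_derivative_transform_within_open[where S="{0<..}"]) (use 1 in \<open>auto simp: sqp_def\<close>)
  next
    case 2
    have "DERIV (\<lambda>t. 0) t :> 0" by (auto intro!: derivative_eq_intros)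
    then have "DERIV sqp t :> 0"
      by (rule has_field_derivative_transform_within_open[where S="{..<0}"]) (use 2 in \<open>auto simp: sqp_def\<close>)
    then show ?thesis using 2 by simp
  next
    case 3
    have "((\<lambda>y. (sqp y - sqp 0) / (y - 0)) \<longlongrightarrow> 0) (at 0)"
    proof (rule Lim_null_comparison)
      show "\<forall>\<^sub>F y in at 0. norm ((sqp y - sqp 0) / (y - 0)) \<le> \<bar>y\<bar>"
        by (intro always_eventually allI) (auto simp: sqp_def max_def power2_eq_square abs_mult)
      show "((\<lambda>y::real. \<bar>y\<bar>) \<longlongrightarrow> 0) (at 0)"
        using tendsto_rabs[OF tendsto_ident_at[of 0 UNIV]] by simp
    qed
    then show ?thesis using 3 by (simp add: has_field_derivative_iff)
  qed
qed

lemma continuous_sqp: "continuous_on UNIV sqp"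
  unfolding sqp_def by (intro continuous_intros)

definition KK :: "real \<Rightarrow> real \<Rightarrow> real" where "KK a c = 1 / (c - a)^4"

definition gam :: "real \<Rightarrow> real \<Rightarrow> real \<Rightarrow> real" where
  "gam a c t = KK a c * sqp ((t - a) * (c - t))"

definition gam' :: "real \<Rightarrow> real \<Rightarrow> real \<Rightarrow> real" where
  "gam' a c t = KK a c * (2 * max 0 ((t - a) * (c - t)) * ((c - t) - (t - a)))"

lemma DERIV_gam: "DERIV (gam a c) t :> gam' a c t"
proof -
  have "DERIV (\<lambda>t. (t - a) * (c - t)) t :> (c - t) - (t - a)"
    by (auto intro!: derivative_eq_intros)
  from DERIV_cmult[OF DERIV_chain2[OF DERIV_sqp this], of "KK a c"] show ?thesis
    unfolding gam_def gam'_def by simp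
qed

lemma gam_bounds:
  assumes "a < c"
  shows "0 \<le> gam a c t" "gam a c t \<le> 1"
proof -
  show "0 \<le> gam a c t" using assms by (simp add: gam_def sqp_def KK_def)
  have "max 0 ((t - a) * (c - t)) \<le> (c - a)^2"
  proof (cases "(t - a) * (c - t) \<le> 0")
    case False
    then have "a < t \<and> t < c \<or> (t < a \<and> c < t)" by (auto simp: mult_less_0_iff not_le zero_less_mult_iff)
    then have "a < t \<and> t < c" using assms by auto
    then have "(t - a) * (c - t) \<le> (c - a) * (c - a)" by (intro mult_mono) auto
    then show ?thesis by (simp add: power2_eq_square)
  qed auto
  then have "(max 0 ((t - a) * (c - t)))^2 \<le> ((c - a)^2)^2" by (intro power_mono) auto
  then show "gam a c t \<le> 1" using assms by (simp add: gam_def sqp_def KK_def power_mult[symmetric])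
qed

lemma gam_pos: "a < t \<Longrightarrow> t < c \<Longrightarrow> 0 < gam a c t"
  by (simp add: gam_def sqp_def KK_def)

lemma gam_zero: "\<not> (a < t \<and> t < c) \<Longrightarrow> a < c \<Longrightarrow> gam a c t = 0"
proof -
  assume "\<not> (a < t \<and> t < c)" "a < c"
  then have "(t - a) * (c - t) \<le> 0"
    by (cases "t \<le> a") (auto intro: mult_nonpos_nonneg mult_nonneg_nonpos)
  then show ?thesis by (simp add: gam_def sqp_def)
qed

definition Fn :: "nat \<Rightarrow> real \<Rightarrow> real \<Rightarrow> real \<Rightarrow> real" where
  "Fn n a c t = 1 - (1 - gam a c t)^n"

definition Fn' :: "nat \<Rightarrow> real \<Rightarrow> real \<Rightarrow> real \<Rightarrow> real" where
  "Fn' n a c t = real n * (1 - gam a c t)^(n - 1) * gam' a c t"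

lemma DERIV_Fn: "DERIV (Fn n a c) t :> Fn' n a c t"
  unfolding Fn_def Fn'_def
  by (auto intro!: derivative_eq_intros DERIV_gam)

lemma continuous_gam: "continuous_on UNIV (gam a c)"
  unfolding gam_def by (intro continuous_intros continuous_on_compose2[OF continuous_sqp]) auto

lemma continuous_gam': "continuous_on UNIV (gam' a c)"
  unfolding gam'_def by (intro continuous_intros)

lemma continuous_Fn': "continuous_on UNIV (Fn' n a c)"
  unfolding Fn'_def by (intro continuous_intros continuous_on_compose2[OF continuous_gam] continuous_gam') auto

lemma continuous_Fn: "continuous_on UNIV (Fn n a c)"
  unfolding Fn_def by (intro continuous_intros continuous_on_compose2[OF continuous_gam]) auto

lemma Fn_bounds: "a < c \<Longrightarrow> 0 \<le> Fn n a c t \<and> Fn n a c t \<le> 1"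
  using gam_bounds[of a c t] by (auto simp: Fn_def power_le_one)

lemma Fn_zero: "\<not> (a < t \<and> t < c) \<Longrightarrow> a < c \<Longrightarrow> Fn n a c t = 0"
  by (simp add: Fn_def gam_zero)

lemma Fn_lim: "a < t \<Longrightarrow> t < c \<Longrightarrow> (\<lambda>n. Fn n a c t) \<longlonglongrightarrow> 1"
proof -
  assume "a < t" "t < c"
  then have g: "0 < gam a c t" "gam a c t \<le> 1" using gam_pos gam_bounds by auto
  have "\<bar>1 - gam a c t\<bar> < 1" using g by linarith
  then have "(\<lambda>n. (1 - gam a c t)^n) \<longlonglongrightarrow> 0" by (rule LIMSEQ_abs_realpow_zero2)
  from tendsto_diff[OF tendsto_const[of 1] this] show ?thesis by (simp add: Fn_def)
qed

definition phi :: "nat \<Rightarrow> 'a::euclidean_space \<Rightarrow> 'a \<Rightarrow> 'a \<Rightarrow> real" where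
  "phi n a c x = (\<Prod>i\<in>Basis. Fn n (a \<bullet> i) (c \<bullet> i) (x \<bullet> i))"

definition phi' :: "nat \<Rightarrow> 'a::euclidean_space \<Rightarrow> 'a \<Rightarrow> 'a \<Rightarrow> 'a \<Rightarrow> real" where
  "phi' n a c x = (\<lambda>v. \<Sum>i\<in>Basis. (v \<bullet> i * Fn' n (a \<bullet> i) (c \<bullet> i) (x \<bullet> i)) *
      (\<Prod>j\<in>Basis - {i}. Fn n (a \<bullet> j) (c \<bullet> j) (x \<bullet> j)))"

lemma phi_deriv: "(phi n a c has_derivative phi' n a c x) (at x)"
proof -
  have "((\<lambda>x. Fn n (a \<bullet> i) (c \<bullet> i) (x \<bullet> i)) has_derivative (\<lambda>v. v \<bullet> i * Fn' n (a \<bullet> i) (c \<bullet> i) (x \<bullet> i))) (at x)"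
    for i :: 'a
    by (rule DERIV_compose_FDERIV[OF DERIV_Fn]) (auto intro!: derivative_eq_intros)
  then show ?thesis unfolding phi_def phi'_def
    by (rule has_derivative_prod)
qed

lemma phi'_cont: "continuous_on UNIV (phi' n a c)"
proof (rule continuous_on_coordinatewise_then_product)
  fix v :: 'a
  show "continuous_on UNIV (\<lambda>x. phi' n a c x v)"
    unfolding phi'_def
    by (intro continuous_intros continuous_on_compose2[OF continuous_Fn] continuous_on_compose2[OF continuous_Fn']) auto
qed

lemma phi_cont: "continuous_on UNIV (phi n a c)"
  unfolding phi_def by (intro continuous_intros continuous_on_compose2[OF continuous_Fn]) auto

lemma phi_zero:
  assumes "\<forall>i\<in>Basis. a \<bullet> i < c \<bullet> i" "x \<notin> box a c"
  shows "phi n a c x = 0"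
proof -
  obtain i where i: "i \<in> Basis" "\<not> (a \<bullet> i < x \<bullet> i \<and> x \<bullet> i < c \<bullet> i)"
    using assms(2) by (auto simp: mem_box)
  then have "Fn n (a \<bullet> i) (c \<bullet> i) (x \<bullet> i) = 0" using assms(1) by (intro Fn_zero) auto
  then show ?thesis unfolding phi_def using i(1) by (intro prod_zero) auto
qed

lemma phi_bounds:
  assumes "\<forall>i\<in>Basis. a \<bullet> i < c \<bullet> i"
  shows "0 \<le> phi n a c x \<and> phi n a c x \<le> 1"
  unfolding phi_def using assms Fn_bounds
  by (auto intro!: prod_nonneg prod_le_1)

lemma phi_lim:
  assumes "\<forall>i\<in>Basis. a \<bullet> i < c \<bullet> i"
  shows "(\<lambda>n. phi n a c x) \<longlonglongrightarrow> indicator (box a c) x"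
proof (cases "x \<in> box a c")
  case True
  have "(\<lambda>n. phi n a c x) \<longlonglongrightarrow> (\<Prod>i\<in>(Basis::'a set). (1::real))"
    unfolding phi_def
  proof (rule tendsto_prod[where f="\<lambda>i n. Fn n (a \<bullet> i) (c \<bullet> i) (x \<bullet> i)" and L="\<lambda>i. 1"])
    fix i :: 'a assume "i \<in> Basis"
    then show "(\<lambda>n. Fn n (a \<bullet> i) (c \<bullet> i) (x \<bullet> i)) \<longlonglongrightarrow> 1"
      using True by (intro Fn_lim) (auto simp: mem_box)
  qed
  then show ?thesis using True by simp
next
  case False
  then show ?thesis using phi_zero[OF assms False] by simp
qed

lemma phi_support:
  assumes "\<forall>i\<in>Basis. a \<bullet> i < c \<bullet> i"
  shows "compact (closure {x. phi n a c x \<noteq> 0})"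
proof -
  have "{x. phi n a c x \<noteq> 0} \<subseteq> cbox a c"
    using phi_zero[OF assms] box_subset_cbox by blast
  then have "closure {x. phi n a c x \<noteq> 0} \<subseteq> cbox a c"
    by (intro closure_minimal) auto
  then show ?thesis by (meson bounded_cbox bounded_subset closed_closure compact_eq_bounded_closed)
qed

lemma fundamental_lemma:
  fixes r :: "'a::euclidean_space \<Rightarrow> real"
  assumes rm[measurable]: "r \<in> borel_measurable lborel"
    and li: "\<And>a c. integrable lborel (\<lambda>x. indicator (cbox a c) x * \<bar>r x\<bar>)"
    and z: "\<And>\<phi> \<phi>'. (\<forall>x. (\<phi> has_derivative \<phi>' x) (at x)) \<and> continuous_on UNIV \<phi>' \<and>
              compact (closure {x. \<phi> x \<noteq> 0}) \<Longrightarrow> (\<integral>x. \<phi> x * r x \<partial>lborel) = 0"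
  shows "AE x in lborel. r x = 0"
proof (rule box_zero_AE[OF rm li])
  fix a c :: 'a
  show "(\<integral>x. indicator (box a c) x * r x \<partial>lborel) = 0"
  proof (cases "\<forall>i\<in>Basis. a \<bullet> i < c \<bullet> i")
    case False
    then have "box a c = {}" by (auto simp: box_eq_empty not_less)
    then show ?thesis by simp
  next
    case True
    have pm: "phi n a c \<in> borel_measurable lborel" for n
      using borel_measurable_continuous_onI[OF phi_cont] by simp
    have "(\<lambda>n. \<integral>x. phi n a c x * r x \<partial>lborel) \<longlonglongrightarrow> (\<integral>x. indicator (box a c) x * r x \<partial>lborel)"
    proof (rule integral_dominated_convergence[where w="\<lambda>x. indicator (cbox a c) x * \<bar>r x\<bar>"])
      show "(\<lambda>x. indicator (box a c) x * r x) \<in> borel_measurable lborel" by measurable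
      show "(\<lambda>x. phi n a c x * r x) \<in> borel_measurable lborel" for n using pm by measurable
      show "integrable lborel (\<lambda>x. indicator (cbox a c) x * \<bar>r x\<bar>)" by (rule li)
      show "AE x in lborel. (\<lambda>n. phi n a c x * r x) \<longlonglongrightarrow> indicator (box a c) x * r x"
        using phi_lim[OF True] by (intro always_eventually allI tendsto_mult tendsto_const) auto
      show "AE x in lborel. norm (phi n a c x * r x) \<le> indicator (cbox a c) x * \<bar>r x\<bar>" for n
      proof (intro always_eventually allI)
        fix x
        show "norm (phi n a c x * r x) \<le> indicator (cbox a c) x * \<bar>r x\<bar>"
        proof (cases "x \<in> box a c")
          case True
          then have "x \<in> cbox a c" using box_subset_cbox by blast
          then show ?thesis using phi_bounds[OF \<open>\<forall>i\<in>Basis. a \<bullet> i < c \<bullet> i\<close>, of n x]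
            by (auto simp: abs_mult intro!: mult_left_le_one_le)
        next
          case False
          then show ?thesis using phi_zero[OF \<open>\<forall>i\<in>Basis. a \<bullet> i < c \<bullet> i\<close> False] by simp
        qed
      qed
    qed
    moreover have "(\<integral>x. phi n a c x * r x \<partial>lborel) = 0" for n
      by (rule z[of "phi n a c" "phi' n a c"]) (use phi_deriv phi'_cont phi_support[OF True] in blast)
    ultimately have "(\<lambda>n. 0::real) \<longlonglongrightarrow> (\<integral>x. indicator (box a c) x * r x \<partial>lborel)" by simp
    then show ?thesis using LIMSEQ_unique[OF _ tendsto_const] by metis
  qed
qed

definition testf :: "('a::euclidean_space \<Rightarrow> real) \<Rightarrow> ('a \<Rightarrow> 'a \<Rightarrow> real) \<Rightarrow> bool" where
  "testf \<phi> \<phi>' \<longleftrightarrow> (\<forall>x. (\<phi> has_derivative \<phi>' x) (at x)) \<and> continuous_on UNIV \<phi>' \<and>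
              compact (closure {x. \<phi> x \<noteq> 0})"

lemma has_weak_grad_testf:
  "has_weak_grad u g \<longleftrightarrow>
     g \<in> borel_measurable lborel \<and>
     (\<forall>K. compact K \<longrightarrow> set_integrable lborel K (\<lambda>x. norm (g x)) \<and> set_integrable lborel K u) \<and>
     (\<forall>\<phi> \<phi>'. testf \<phi> \<phi>' \<longrightarrow>
        (\<forall>b\<in>Basis. (\<integral>x. u x * \<phi>' x b \<partial>lborel) = - (\<integral>x. \<phi> x * (g x \<bullet> b) \<partial>lborel)))"
  unfolding has_weak_grad_def testf_def by blast

lemma testf_outside:
  assumes "testf \<phi> \<phi>'" "x \<notin> closure {x. \<phi> x \<noteq> 0}"
  shows "\<phi> x = 0 \<and> \<phi>' x = (\<lambda>_. 0)"
proof -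
  let ?U = "- closure {x. \<phi> x \<noteq> 0}"
  have U: "open ?U" "x \<in> ?U" using assms(2) by auto
  have z: "\<phi> y = 0" if "y \<in> ?U" for y
  proof (rule ccontr)
    assume "\<phi> y \<noteq> 0"
    then have "y \<in> closure {x. \<phi> x \<noteq> 0}" using closure_subset[of "{x. \<phi> x \<noteq> 0}"] by (simp add: subset_iff)
    then show False using that by simp
  qed
  have "((\<lambda>_. 0::real) has_derivative (\<lambda>_. 0)) (at x)" by simp
  then have d0: "(\<phi> has_derivative (\<lambda>_. 0)) (at x)"
    by (rule has_derivative_transform_within_open[OF _ U]) (metis z)
  have d1: "(\<phi> has_derivative \<phi>' x) (at x)" using assms(1) by (simp add: testf_def)
  have "\<phi>' x = (\<lambda>_. 0)" by (rule has_derivative_unique[OF d1 d0])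
  moreover have "\<phi> x = 0" using z U(2) by blast
  ultimately show ?thesis by simp
qed

lemma testf_bound:
  assumes "testf \<phi> \<phi>'"
  shows "\<exists>B. \<forall>x. \<bar>\<phi> x\<bar> \<le> B \<and> \<bar>\<phi>' x b\<bar> \<le> B"
proof -
  let ?K = "closure {x. \<phi> x \<noteq> 0}"
  have K: "compact ?K" using assms by (auto simp: testf_def)
  have d: "\<forall>x. (\<phi> has_derivative \<phi>' x) (at x)" using assms by (simp add: testf_def)
  have c1: "continuous_on UNIV \<phi>"
    by (rule continuous_at_imp_continuous_on) (use d has_derivative_continuous in blast)
  have "continuous_on UNIV \<phi>'" using assms by (simp add: testf_def)
  then have c2: "continuous_on UNIV (\<lambda>x. \<phi>' x b)"
    by (rule continuous_on_product_then_coordinatewise)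
  have "compact ((\<lambda>x. \<bar>\<phi> x\<bar> + \<bar>\<phi>' x b\<bar>) ` ?K)"
    by (intro compact_continuous_image K continuous_intros continuous_on_subset[OF c1] continuous_on_subset[OF c2]) auto
  then obtain B where B: "\<forall>y\<in>(\<lambda>x. \<bar>\<phi> x\<bar> + \<bar>\<phi>' x b\<bar>) ` ?K. norm y \<le> B"
    using compact_imp_bounded bounded_iff by metis
  have "\<bar>\<phi> x\<bar> \<le> max B 0 \<and> \<bar>\<phi>' x b\<bar> \<le> max B 0" for x
  proof (cases "x \<in> ?K")
    case True
    then have "norm (\<bar>\<phi> x\<bar> + \<bar>\<phi>' x b\<bar>) \<le> B" using B by blast
    then show ?thesis by auto
  next
    case False
    then show ?thesis using testf_outside[OF assms False] by auto
  qed
  then show ?thesis by blast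
qed

lemma testf_meas:
  assumes "testf \<phi> \<phi>'"
  shows "\<phi> \<in> borel_measurable lborel" "(\<lambda>x. \<phi>' x b) \<in> borel_measurable lborel"
proof -
  have d: "\<forall>x. (\<phi> has_derivative \<phi>' x) (at x)" using assms by (simp add: testf_def)
  have c1: "continuous_on UNIV \<phi>"
    by (rule continuous_at_imp_continuous_on) (use d has_derivative_continuous in blast)
  have "continuous_on UNIV \<phi>'" using assms by (simp add: testf_def)
  then have c2: "continuous_on UNIV (\<lambda>x. \<phi>' x b)"
    by (rule continuous_on_product_then_coordinatewise)
  show "\<phi> \<in> borel_measurable lborel" "(\<lambda>x. \<phi>' x b) \<in> borel_measurable lborel"
    using borel_measurable_continuous_onI[OF c1] borel_measurable_continuous_onI[OF c2] by auto
qed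

lemma testf_int:
  assumes hw: "has_weak_grad u g" and t: "testf \<phi> \<phi>'"
  shows "integrable lborel (\<lambda>x. u x * \<phi>' x b)" "integrable lborel (\<lambda>x. \<phi> x * (g x \<bullet> b))"
proof -
  let ?K = "closure {x. \<phi> x \<noteq> 0}"
  have K: "compact ?K" using t by (auto simp: testf_def)
  obtain B where B: "\<And>x. \<bar>\<phi> x\<bar> \<le> B \<and> \<bar>\<phi>' x b\<bar> \<le> B" using testf_bound[OF t] by blast
  have gm: "g \<in> borel_measurable lborel" and si: "set_integrable lborel ?K (\<lambda>x. norm (g x))" "set_integrable lborel ?K u"
    using hw K by (auto simp: has_weak_grad_def)
  note m = testf_meas(1)[OF t] testf_meas(2)[OF t, of b]
  have i1: "integrable lborel (\<lambda>x. indicator ?K x * u x)" using si(2) by (simp add: set_integrable_def)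
  have i2: "integrable lborel (\<lambda>x. indicator ?K x * norm (g x))" using si(1) by (simp add: set_integrable_def)
  have e1: "u x * \<phi>' x b = (indicator ?K x * u x) * \<phi>' x b" for x
  proof (cases "x \<in> ?K")
    case False
    then show ?thesis using testf_outside[OF t False] by simp
  qed simp
  have "integrable lborel (\<lambda>x. (indicator ?K x * u x) * \<phi>' x b)"
  proof (rule Bochner_Integration.integrable_bound[of _ "\<lambda>x. B * \<bar>indicator ?K x * u x\<bar>"])
    show "integrable lborel (\<lambda>x. B * \<bar>indicator ?K x * u x\<bar>)" using i1 by auto
    show "(\<lambda>x. indicator ?K x * u x * \<phi>' x b) \<in> borel_measurable lborel"
      using borel_measurable_integrable[OF i1] m by measurable
    show "AE x in lborel. norm (indicator ?K x * u x * \<phi>' x b) \<le> norm (B * \<bar>indicator ?K x * u x\<bar>)"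
    proof (intro always_eventually allI)
      fix x
      have "\<bar>\<phi>' x b\<bar> * \<bar>indicator ?K x * u x\<bar> \<le> B * \<bar>indicator ?K x * u x\<bar>"
        using B[of x] by (intro mult_right_mono) auto
      also have "\<dots> \<le> \<bar>B\<bar> * \<bar>indicator ?K x * u x\<bar>" by (intro mult_right_mono) auto
      finally show "norm (indicator ?K x * u x * \<phi>' x b) \<le> norm (B * \<bar>indicator ?K x * u x\<bar>)"
        by (simp add: abs_mult mult.commute)
    qed
  qed
  then show "integrable lborel (\<lambda>x. u x * \<phi>' x b)" by (subst e1) 
  have e2: "\<phi> x * (g x \<bullet> b) = \<phi> x * (indicator ?K x * (g x \<bullet> b))" for x
  proof (cases "x \<in> ?K")
    case False
    then show ?thesis using testf_outside[OF t False] by simp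
  qed simp
  show "integrable lborel (\<lambda>x. \<phi> x * (g x \<bullet> b))"
  proof (rule Bochner_Integration.integrable_bound[of _ "\<lambda>x. B * (norm b * (indicator ?K x * norm (g x)))"])
    show "integrable lborel (\<lambda>x. B * (norm b * (indicator ?K x * norm (g x))))" using i2 by auto
    show "(\<lambda>x. \<phi> x * (g x \<bullet> b)) \<in> borel_measurable lborel" using gm m by measurable
    show "AE x in lborel. norm (\<phi> x * (g x \<bullet> b)) \<le> norm (B * (norm b * (indicator ?K x * norm (g x))))"
    proof (intro always_eventually allI)
      fix x
      have B0: "0 \<le> B" using B[of x] by linarith
      have "indicator ?K x * \<bar>g x \<bullet> b\<bar> \<le> norm b * (indicator ?K x * norm (g x))"
        using Cauchy_Schwarz_ineq2[of "g x" b] by (auto simp: indicator_def mult.commute)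
      then have "\<bar>\<phi> x\<bar> * (indicator ?K x * \<bar>g x \<bullet> b\<bar>) \<le> B * (norm b * (indicator ?K x * norm (g x)))"
        using B[of x] B0 by (rule_tac mult_mono) auto
      then have "\<bar>\<phi> x * (indicator ?K x * (g x \<bullet> b))\<bar> \<le> B * (norm b * (indicator ?K x * norm (g x)))"
        by (simp add: abs_mult)
      then show "norm (\<phi> x * (g x \<bullet> b)) \<le> norm (B * (norm b * (indicator ?K x * norm (g x))))"
        by (subst e2) auto
    qed
  qed
qed

lemma hwg_lin:
  fixes u v :: "'a::euclidean_space \<Rightarrow> real"
  assumes hu: "has_weak_grad u g" and hv: "has_weak_grad v h"
  shows "has_weak_grad (\<lambda>x. a * u x + b * v x) (\<lambda>x. a *\<^sub>R g x + b *\<^sub>R h x)"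
  unfolding has_weak_grad_testf
proof (intro conjI allI impI ballI)
  have gm: "g \<in> borel_measurable lborel" and hm: "h \<in> borel_measurable lborel"
    using hu hv by (auto simp: has_weak_grad_def)
  show "(\<lambda>x. a *\<^sub>R g x + b *\<^sub>R h x) \<in> borel_measurable lborel" using gm hm by measurable
  fix K :: "'a set" assume K: "compact K"
  have si: "set_integrable lborel K (\<lambda>x. norm (g x))" "set_integrable lborel K u"
     "set_integrable lborel K (\<lambda>x. norm (h x))" "set_integrable lborel K v"
    using hu hv K by (auto simp: has_weak_grad_def)
  show "set_integrable lborel K (\<lambda>x. a * u x + b * v x)"
    using set_integral_add(1)[OF set_integrable_mult_right[OF si(2)] set_integrable_mult_right[OF si(4)]] by simp
  have Kb: "K \<in> sets lborel" using K by (simp add: compact_imp_closed)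
  show "set_integrable lborel K (\<lambda>x. norm (a *\<^sub>R g x + b *\<^sub>R h x))"
    unfolding set_integrable_def
  proof (rule Bochner_Integration.integrable_bound[of _ "\<lambda>x. \<bar>a\<bar> * (indicator K x * norm (g x)) + \<bar>b\<bar> * (indicator K x * norm (h x))"])
    show "integrable lborel (\<lambda>x. \<bar>a\<bar> * (indicator K x * norm (g x)) + \<bar>b\<bar> * (indicator K x * norm (h x)))"
      using si(1,3) by (auto simp: set_integrable_def)
    show "(\<lambda>x. indicator K x *\<^sub>R norm (a *\<^sub>R g x + b *\<^sub>R h x)) \<in> borel_measurable lborel"
      using gm hm Kb by measurable
    show "AE x in lborel. norm (indicator K x *\<^sub>R norm (a *\<^sub>R g x + b *\<^sub>R h x))
       \<le> norm (\<bar>a\<bar> * (indicator K x * norm (g x)) + \<bar>b\<bar> * (indicator K x * norm (h x)))"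
      by (intro always_eventually allI)
        (auto simp: indicator_def intro!: order_trans[OF norm_triangle_ineq] add_mono)
  qed
next
  fix \<phi> :: "'a \<Rightarrow> real" and \<phi>' :: "'a \<Rightarrow> 'a \<Rightarrow> real" and c :: 'a assume t: "testf \<phi> \<phi>'" and c: "c \<in> Basis"
  note iu = testf_int[OF hu t, of c] and iv = testf_int[OF hv t, of c]
  have eu: "(\<integral>x. u x * \<phi>' x c \<partial>lborel) = - (\<integral>x. \<phi> x * (g x \<bullet> c) \<partial>lborel)"
    using hu t c by (auto simp: has_weak_grad_testf)
  have ev: "(\<integral>x. v x * \<phi>' x c \<partial>lborel) = - (\<integral>x. \<phi> x * (h x \<bullet> c) \<partial>lborel)"
    using hv t c by (auto simp: has_weak_grad_testf)
  have "(\<integral>x. (a * u x + b * v x) * \<phi>' x c \<partial>lborel) = (\<integral>x. a * (u x * \<phi>' x c) + b * (v x * \<phi>' x c) \<partial>lborel)"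
    by (simp add: algebra_simps)
  also have "\<dots> = a * (\<integral>x. u x * \<phi>' x c \<partial>lborel) + b * (\<integral>x. v x * \<phi>' x c \<partial>lborel)"
    using iu iv by simp
  also have "\<dots> = - (a * (\<integral>x. \<phi> x * (g x \<bullet> c) \<partial>lborel) + b * (\<integral>x. \<phi> x * (h x \<bullet> c) \<partial>lborel))"
    by (simp add: eu ev)
  also have "a * (\<integral>x. \<phi> x * (g x \<bullet> c) \<partial>lborel) + b * (\<integral>x. \<phi> x * (h x \<bullet> c) \<partial>lborel)
     = (\<integral>x. a * (\<phi> x * (g x \<bullet> c)) + b * (\<phi> x * (h x \<bullet> c)) \<partial>lborel)"
    using iu iv by simp
  also have "\<dots> = (\<integral>x. \<phi> x * ((a *\<^sub>R g x + b *\<^sub>R h x) \<bullet> c) \<partial>lborel)"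
    by (simp add: algebra_simps inner_add_left)
  finally show "(\<integral>x. (a * u x + b * v x) * \<phi>' x c \<partial>lborel) = - (\<integral>x. \<phi> x * ((a *\<^sub>R g x + b *\<^sub>R h x) \<bullet> c) \<partial>lborel)" .
qed

lemma hwg_unique:
  fixes u :: "'a::euclidean_space \<Rightarrow> real"
  assumes h1: "has_weak_grad u g1" and h2: "has_weak_grad u g2"
  shows "AE x in lborel. g1 x = g2 x"
proof -
  have gm: "g1 \<in> borel_measurable lborel" "g2 \<in> borel_measurable lborel"
    using h1 h2 by (auto simp: has_weak_grad_def)
  have "AE x in lborel. (g1 x - g2 x) \<bullet> c = 0" if c: "c \<in> Basis" for c :: 'a
  proof (rule fundamental_lemma)
    show "(\<lambda>x. (g1 x - g2 x) \<bullet> c) \<in> borel_measurable lborel" using gm by measurable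
    fix a b :: 'a
    have si: "set_integrable lborel (cbox a b) (\<lambda>x. norm (g1 x))" "set_integrable lborel (cbox a b) (\<lambda>x. norm (g2 x))"
      using h1 h2 by (auto simp: has_weak_grad_def)
    show "integrable lborel (\<lambda>x. indicator (cbox a b) x * \<bar>(g1 x - g2 x) \<bullet> c\<bar>)"
    proof (rule Bochner_Integration.integrable_bound[of _ "\<lambda>x. indicator (cbox a b) x * norm (g1 x) + indicator (cbox a b) x * norm (g2 x)"])
      show "integrable lborel (\<lambda>x. indicator (cbox a b) x * norm (g1 x) + indicator (cbox a b) x * norm (g2 x))"
        using si by (auto simp: set_integrable_def)
      show "(\<lambda>x. indicator (cbox a b) x * \<bar>(g1 x - g2 x) \<bullet> c\<bar>) \<in> borel_measurable lborel" using gm by measurable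
      show "AE x in lborel. norm (indicator (cbox a b) x * \<bar>(g1 x - g2 x) \<bullet> c\<bar>)
          \<le> norm (indicator (cbox a b) x * norm (g1 x) + indicator (cbox a b) x * norm (g2 x))"
      proof (intro always_eventually allI)
        fix x
        have "\<bar>(g1 x - g2 x) \<bullet> c\<bar> \<le> norm (g1 x - g2 x)" using c by (simp add: Basis_le_norm)
        also have "\<dots> \<le> norm (g1 x) + norm (g2 x)" by (rule norm_triangle_ineq4)
        finally show "norm (indicator (cbox a b) x * \<bar>(g1 x - g2 x) \<bullet> c\<bar>)
          \<le> norm (indicator (cbox a b) x * norm (g1 x) + indicator (cbox a b) x * norm (g2 x))"
          by (auto simp: indicator_def)
      qed
    qed
  next
    fix \<phi> :: "'a \<Rightarrow> real" and \<phi>' :: "'a \<Rightarrow> 'a \<Rightarrow> real"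
    assume "(\<forall>x. (\<phi> has_derivative \<phi>' x) (at x)) \<and> continuous_on UNIV \<phi>' \<and> compact (closure {x. \<phi> x \<noteq> 0})"
    then have t: "testf \<phi> \<phi>'" by (simp add: testf_def)
    note i1 = testf_int[OF h1 t, of c] and i2 = testf_int[OF h2 t, of c]
    have "(\<integral>x. \<phi> x * (g1 x \<bullet> c) \<partial>lborel) = (\<integral>x. \<phi> x * (g2 x \<bullet> c) \<partial>lborel)"
      using h1 h2 t c by (auto simp: has_weak_grad_testf)
    then show "(\<integral>x. \<phi> x * ((g1 x - g2 x) \<bullet> c) \<partial>lborel) = 0"
      using i1 i2 by (simp add: inner_diff_left right_diff_distrib)
  qed
  then have "AE x in lborel. \<forall>c\<in>Basis. (g1 x - g2 x) \<bullet> c = 0"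
    by (subst eventually_ball_finite_distrib) auto
  then show ?thesis
    by eventually_elim (metis euclidean_all_zero_iff inner_diff_left right_minus_eq)
qed

lemma wgrad_AE:
  assumes "has_weak_grad u g"
  shows "has_weak_grad u (wgrad u)" "AE x in lborel. wgrad u x = g x"
proof -
  show h: "has_weak_grad u (wgrad u)" unfolding wgrad_def using someI[of "has_weak_grad u" g] assms by simp
  show "AE x in lborel. wgrad u x = g x" by (rule hwg_unique[OF h assms])
qed

definition NN :: "real \<Rightarrow> 'x measure \<Rightarrow> ('x \<Rightarrow> 'b::euclidean_space) \<Rightarrow> ennreal" where
  "NN p M f = (\<integral>\<^sup>+ x. ennreal (norm (f x) powr p) \<partial>M)"

definition PP :: "real \<Rightarrow> 'x measure \<Rightarrow> ('x \<Rightarrow> 'b::euclidean_space) \<Rightarrow> ('x \<Rightarrow> 'b) \<Rightarrow> real" where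
  "PP p M f g = (\<integral>x. Phi p (f x) \<bullet> g x \<partial>M)"

lemma NN_fin:
  assumes fm: "f \<in> borel_measurable M" and fin: "NN p M f < \<infinity>"
  shows "integrable M (\<lambda>x. norm (f x) powr p)" "enn2real (NN p M f) = (\<integral>x. norm (f x) powr p \<partial>M)"
proof -
  show i: "integrable M (\<lambda>x. norm (f x) powr p)"
    by (rule integrableI_nonneg) (use fm fin in \<open>auto simp: NN_def\<close>)
  have "NN p M f = ennreal (\<integral>x. norm (f x) powr p \<partial>M)"
    unfolding NN_def by (rule nn_integral_eq_integral[OF i]) auto
  then show "enn2real (NN p M f) = (\<integral>x. norm (f x) powr p \<partial>M)"
    by (simp add: integral_nonneg_AE)
qed

lemma NN_int_fin:
  assumes "integrable M (\<lambda>x. norm (f x) powr p)"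
  shows "NN p M f < \<infinity>" "enn2real (NN p M f) = (\<integral>x. norm (f x) powr p \<partial>M)"
proof -
  have "NN p M f = ennreal (\<integral>x. norm (f x) powr p \<partial>M)"
    unfolding NN_def by (rule nn_integral_eq_integral[OF assms]) auto
  then show "NN p M f < \<infinity>" "enn2real (NN p M f) = (\<integral>x. norm (f x) powr p \<partial>M)"
    by (auto simp: integral_nonneg_AE)
qed

lemma G_A:
  fixes f g :: "'x \<Rightarrow> 'b::euclidean_space"
  assumes p: "1 < p" and fm: "f \<in> borel_measurable M" and gm: "g \<in> borel_measurable M"
    and ff: "NN p M f < \<infinity>" and gf: "NN p M g < \<infinity>"
  shows "NN p M (\<lambda>x. a *\<^sub>R f x + b *\<^sub>R g x) < \<infinity>"
    "enn2real (NN p M (\<lambda>x. a *\<^sub>R f x + b *\<^sub>R g x)) \<le>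
       2 powr p * (\<bar>a\<bar> powr p * enn2real (NN p M f) + \<bar>b\<bar> powr p * enn2real (NN p M g))"
proof -
  note fi = NN_fin[OF fm ff] and gi = NN_fin[OF gm gf]
  have hi: "integrable M (\<lambda>x. norm (a *\<^sub>R f x + b *\<^sub>R g x) powr p)"
    using integrable_norm_powr_lin[OF _ fm gm fi(1) gi(1)] p by simp
  show "NN p M (\<lambda>x. a *\<^sub>R f x + b *\<^sub>R g x) < \<infinity>" using NN_int_fin[OF hi] by simp
  have "(\<integral>x. norm (a *\<^sub>R f x + b *\<^sub>R g x) powr p \<partial>M) \<le>
        (\<integral>x. 2 powr p * (\<bar>a\<bar> powr p * norm (f x) powr p + \<bar>b\<bar> powr p * norm (g x) powr p) \<partial>M)"
  proof (rule integral_mono[OF hi])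
    show "integrable M (\<lambda>x. 2 powr p * (\<bar>a\<bar> powr p * norm (f x) powr p + \<bar>b\<bar> powr p * norm (g x) powr p))"
      using fi gi by auto
    fix x
    have "norm (a *\<^sub>R f x + b *\<^sub>R g x) powr p \<le> 2 powr p * (norm (a *\<^sub>R f x) powr p + norm (b *\<^sub>R g x) powr p)"
      by (rule norm_add_powr) (use p in auto)
    then show "norm (a *\<^sub>R f x + b *\<^sub>R g x) powr p \<le> 2 powr p * (\<bar>a\<bar> powr p * norm (f x) powr p + \<bar>b\<bar> powr p * norm (g x) powr p)"
      by (simp add: powr_mult)
  qed
  also have "\<dots> = 2 powr p * (\<bar>a\<bar> powr p * enn2real (NN p M f) + \<bar>b\<bar> powr p * enn2real (NN p M g))"
    using fi gi by simp
  finally show "enn2real (NN p M (\<lambda>x. a *\<^sub>R f x + b *\<^sub>R g x)) \<le>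
       2 powr p * (\<bar>a\<bar> powr p * enn2real (NN p M f) + \<bar>b\<bar> powr p * enn2real (NN p M g))"
    using NN_int_fin[OF hi] by simp
qed

lemma G_B:
  fixes f g :: "'x \<Rightarrow> 'b::euclidean_space"
  assumes p: "1 < p" and fm: "f \<in> borel_measurable M" and gm: "g \<in> borel_measurable M"
    and ff: "NN p M f < \<infinity>" and gf: "NN p M g < \<infinity>"
  shows "\<bar>PP p M f g\<bar> \<le> enn2real (NN p M f) powr ((p - 1) / p) * enn2real (NN p M g) powr (1 / p)"
  using pair_bound[OF p fm gm NN_fin(1)[OF fm ff] NN_fin(1)[OF gm gf]] NN_fin(2)[OF fm ff] NN_fin(2)[OF gm gf]
  by (simp add: PP_def)

lemma G_C:
  fixes f g h :: "'x \<Rightarrow> 'b::euclidean_space"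
  assumes p: "1 < p" and fm: "f \<in> borel_measurable M" and gm: "g \<in> borel_measurable M" and hm: "h \<in> borel_measurable M"
    and ff: "NN p M f < \<infinity>" and gf: "NN p M g < \<infinity>" and hf: "NN p M h < \<infinity>"
  shows "PP p M f (\<lambda>x. a *\<^sub>R g x + b *\<^sub>R h x) = a * PP p M f g + b * PP p M f h"
  using pair_linear[OF p fm gm hm NN_fin(1)[OF fm ff] NN_fin(1)[OF gm gf] NN_fin(1)[OF hm hf]]
  by (simp add: PP_def)

lemma G_D:
  fixes f1 f g :: "'x \<Rightarrow> 'b::euclidean_space"
  assumes p: "1 < p" and f1m: "f1 \<in> borel_measurable M" and fm: "f \<in> borel_measurable M" and gm: "g \<in> borel_measurable M"
    and f1f: "NN p M f1 < \<infinity>" and ff: "NN p M f < \<infinity>" and gf: "NN p M g < \<infinity>"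
    and C: "0 \<le> C" "0 \<le> \<eta>"
    and ineq: "\<And>a b::'b. norm (Phi p a - Phi p b) powr (p / (p - 1))
            \<le> C * norm (a - b) powr p + \<eta> * (norm a powr p + norm b powr p)"
  shows "\<bar>PP p M f1 g - PP p M f g\<bar> \<le>
     (C * enn2real (NN p M (\<lambda>x. f1 x - f x)) + \<eta> * (enn2real (NN p M f1) + enn2real (NN p M f)))
        powr ((p - 1) / p) * enn2real (NN p M g) powr (1 / p)"
proof -
  have dm: "(\<lambda>x. f1 x - f x) \<in> borel_measurable M" using f1m fm by measurable
  have df: "NN p M (\<lambda>x. f1 x - f x) < \<infinity>"
    using G_A(1)[OF p f1m fm f1f ff, of 1 "-1"] by simp
  show ?thesis
    using pair_diff_bound[OF p f1m fm gm NN_fin(1)[OF f1m f1f] NN_fin(1)[OF fm ff] NN_fin(1)[OF gm gf] C ineq]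
      NN_fin(2)[OF f1m f1f] NN_fin(2)[OF fm ff] NN_fin(2)[OF gm gf] NN_fin(2)[OF dm df]
    by (simp add: PP_def)
qed

definition kern :: "real \<Rightarrow> real \<Rightarrow> 'a::euclidean_space \<times> 'a \<Rightarrow> real" where
  "kern p s z = norm (fst z - snd z) powr (real DIM('a) + s * p)"

definition Ms :: "real \<Rightarrow> real \<Rightarrow> ('a::euclidean_space \<times> 'a) measure" where
  "Ms p s = density (lborel \<Otimes>\<^sub>M lborel) (\<lambda>z. ennreal (cNsp DIM('a) s p / kern p s z))"

definition Df :: "('a \<Rightarrow> real) \<Rightarrow> 'a \<times> 'a \<Rightarrow> real" where
  "Df u z = u (fst z) - u (snd z)"

lemma kern_meas[measurable]: "kern p s \<in> borel_measurable (lborel \<Otimes>\<^sub>M lborel)"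
  unfolding kern_def by measurable

lemma Df_meas[measurable]:
  assumes "u \<in> borel_measurable lborel"
  shows "Df u \<in> borel_measurable (lborel \<Otimes>\<^sub>M lborel)"
proof -
  have "(\<lambda>z. u (fst z)) \<in> borel_measurable (lborel \<Otimes>\<^sub>M lborel)"
    by (rule measurable_compose[OF measurable_fst assms])
  moreover have "(\<lambda>z. u (snd z)) \<in> borel_measurable (lborel \<Otimes>\<^sub>M lborel)"
    by (rule measurable_compose[OF measurable_snd assms])
  ultimately show ?thesis unfolding Df_def by (rule borel_measurable_diff)
qed

lemma sets_Ms[measurable_cong, simp]: "sets (Ms p s) = sets (lborel \<Otimes>\<^sub>M lborel)"
  by (simp add: Ms_def)

lemma R0:
  "seminorm_pow p 0 u = NN p lborel u"
  "pairing p 0 u v = PP p lborel u v"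
  by (simp_all add: seminorm_pow_def NN_def pairing_def PP_def Phi_def)

lemma R1s:
  assumes "has_weak_grad u g"
  shows "seminorm_pow p 1 u = NN p lborel g"
proof -
  have "seminorm_pow p 1 u = (\<integral>\<^sup>+ x. ennreal (norm (wgrad u x) powr p) \<partial>lborel)"
    using assms by (auto simp: seminorm_pow_def)
  also have "\<dots> = NN p lborel g" unfolding NN_def
    using wgrad_AE(2)[OF assms] by (intro nn_integral_cong_AE) (auto elim: eventually_mono)
  finally show ?thesis .
qed

lemma R1p:
  assumes "has_weak_grad u g" "has_weak_grad v h"
  shows "pairing p 1 u v = PP p lborel g h"
proof -
  have "pairing p 1 u v = (\<integral>x. norm (wgrad u x) powr (p - 2) * (wgrad u x \<bullet> wgrad v x) \<partial>lborel)"
    by (simp add: pairing_def)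
  also have "\<dots> = PP p lborel g h" unfolding PP_def
  proof (rule integral_cong_AE)
    have m: "wgrad u \<in> borel_measurable lborel" "wgrad v \<in> borel_measurable lborel"
      "g \<in> borel_measurable lborel" "h \<in> borel_measurable lborel"
      using wgrad_AE(1)[OF assms(1)] wgrad_AE(1)[OF assms(2)] assms by (auto simp: has_weak_grad_def)
    show "(\<lambda>x. norm (wgrad u x) powr (p - 2) * (wgrad u x \<bullet> wgrad v x)) \<in> borel_measurable lborel"
      using m by measurable
    show "(\<lambda>x. Phi p (g x) \<bullet> h x) \<in> borel_measurable lborel"
      unfolding Phi_def using m by measurable
    show "AE x in lborel. norm (wgrad u x) powr (p - 2) * (wgrad u x \<bullet> wgrad v x) = Phi p (g x) \<bullet> h x"
      using wgrad_AE(2)[OF assms(1)] wgrad_AE(2)[OF assms(2)]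
      by eventually_elim (simp add: Phi_def)
  qed
  finally show ?thesis .
qed

lemma cNsp_nonneg:
  assumes "0 < s" "s < 1" "1 < p" "0 < N"
  shows "0 \<le> cNsp N s p"
proof -
  have "0 < Gamma ((p * s + p + real N - 2) / 2)"
  proof (rule Gamma_real_pos)
    have "p * s > 0" using assms by simp
    moreover have "real N \<ge> 1" using assms by simp
    ultimately have "0 < p * s + p + real N - 2" using assms by linarith
    then show "0 < (p * s + p + real N - 2) / 2" by simp
  qed
  moreover have "0 < Gamma (1 - s)" using assms by (intro Gamma_real_pos) simp
  ultimately show ?thesis using assms unfolding cNsp_def by (intro divide_nonneg_pos mult_nonneg_nonneg) auto
qed

lemma Rfs:
  fixes u :: "'a::euclidean_space \<Rightarrow> real"
  assumes s: "0 < s" "s < 1" and p: "1 < p" and um[measurable]: "u \<in> borel_measurable lborel"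
  shows "seminorm_pow p s u = NN p (Ms p s) (Df u)"
proof -
  define c where "c = cNsp DIM('a) s p"
  have c0: "0 \<le> c" unfolding c_def using cNsp_nonneg[OF s p] by simp
  have "seminorm_pow p s u = ennreal c * (\<integral>\<^sup>+ z. ennreal (\<bar>Df u z\<bar> powr p / kern p s z) \<partial>(lborel \<Otimes>\<^sub>M lborel))"
    using s by (simp add: seminorm_pow_def c_def Df_def kern_def)
  also have "\<dots> = (\<integral>\<^sup>+ z. ennreal c * ennreal (\<bar>Df u z\<bar> powr p / kern p s z) \<partial>(lborel \<Otimes>\<^sub>M lborel))"
    by (rule nn_integral_cmult[symmetric]) measurable
  also have "\<dots> = (\<integral>\<^sup>+ z. ennreal (c / kern p s z) * ennreal (norm (Df u z) powr p) \<partial>(lborel \<Otimes>\<^sub>M lborel))"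
  proof (rule nn_integral_cong)
    fix z :: "'a \<times> 'a"
    have k: "0 \<le> kern p s z" by (simp add: kern_def)
    show "ennreal c * ennreal (\<bar>Df u z\<bar> powr p / kern p s z) = ennreal (c / kern p s z) * ennreal (norm (Df u z) powr p)"
      using c0 k by (simp add: ennreal_mult[symmetric])
  qed
  also have "\<dots> = NN p (Ms p s) (Df u)"
    unfolding NN_def Ms_def c_def by (rule nn_integral_density[symmetric]) measurable
  finally show ?thesis .
qed

lemma Rfp:
  fixes u v :: "'a::euclidean_space \<Rightarrow> real"
  assumes s: "0 < s" "s < 1" and p: "1 < p" and um[measurable]: "u \<in> borel_measurable lborel"
    and vm[measurable]: "v \<in> borel_measurable lborel"
  shows "pairing p s u v = PP p (Ms p s) (Df u) (Df v)"
proof -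
  define c where "c = cNsp DIM('a) s p"
  have c0: "0 \<le> c" unfolding c_def using cNsp_nonneg[OF s p] by simp
  have "pairing p s u v = c * (\<integral>z. Phi p (Df u z) \<bullet> Df v z / kern p s z \<partial>(lborel \<Otimes>\<^sub>M lborel))"
    using s by (simp add: pairing_def c_def Df_def kern_def Phi_def)
  also have "\<dots> = (\<integral>z. (c / kern p s z) *\<^sub>R (Phi p (Df u z) \<bullet> Df v z) \<partial>(lborel \<Otimes>\<^sub>M lborel))"
    by (simp add: integral_mult_right_zero[symmetric])
  also have "\<dots> = PP p (Ms p s) (Df u) (Df v)"
    unfolding PP_def Ms_def c_def
    by (rule integral_density[symmetric]) (use p c0 in \<open>auto simp: kern_def c_def\<close>)
  finally show ?thesis .
qed

definition sn :: "real \<Rightarrow> real \<Rightarrow> ('a::euclidean_space \<Rightarrow> real) \<Rightarrow> real" where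
  "sn p s u = enn2real (seminorm_pow p s u)"

lemma fin1: "seminorm_pow p 1 u < \<infinity> \<Longrightarrow> \<exists>g. has_weak_grad u g"
  by (cases "\<exists>g. has_weak_grad u g") (auto simp: seminorm_pow_def)

lemma hwg_meas: "has_weak_grad u g \<Longrightarrow> g \<in> borel_measurable lborel"
  by (simp add: has_weak_grad_def)

lemma Df_meas_Ms: "u \<in> borel_measurable lborel \<Longrightarrow> Df u \<in> borel_measurable (Ms p s)"
  using Df_meas[of u] by (simp add: measurable_cong_sets[OF sets_Ms refl])

lemma Df_lin: "Df (\<lambda>x. a * u x + b * v x) = (\<lambda>z. a *\<^sub>R Df u z + b *\<^sub>R Df v z)"
  by (auto simp: Df_def algebra_simps)

lemma Df_diff: "Df (\<lambda>x. w x - u x) = (\<lambda>z. Df w z - Df u z)"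
  by (auto simp: Df_def algebra_simps)

lemma real_lin: "(\<lambda>x. a * u x + b * v x) = (\<lambda>x. a *\<^sub>R u x + b *\<^sub>R (v x::real))"
  by simp

lemma hwg_diff: "has_weak_grad w g \<Longrightarrow> has_weak_grad u h \<Longrightarrow> has_weak_grad (\<lambda>x. w x - u x) (\<lambda>x. g x - h x)"
  using hwg_lin[of w g u h 1 "-1"] by simp

lemma S_A:
  fixes u v :: "'a::euclidean_space \<Rightarrow> real"
  assumes p: "1 < p" and s: "0 \<le> s" "s \<le> 1"
    and um[measurable]: "u \<in> borel_measurable lborel" and vm[measurable]: "v \<in> borel_measurable lborel"
    and uf: "seminorm_pow p s u < \<infinity>" and vf: "seminorm_pow p s v < \<infinity>"
  shows "seminorm_pow p s (\<lambda>x. a * u x + b * v x) < \<infinity> \<and>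
    sn p s (\<lambda>x. a * u x + b * v x) \<le> 2 powr p * (\<bar>a\<bar> powr p * sn p s u + \<bar>b\<bar> powr p * sn p s v)"
proof -
  consider "s = 0" | "0 < s \<and> s < 1" | "s = 1" using s by linarith
  then show ?thesis
  proof cases
    case 1
    show ?thesis using G_A[OF p um vm, of a b] uf vf unfolding 1 R0 sn_def real_lin by simp
  next
    case 2
    then have s': "0 < s" "s < 1" by auto
    have lm: "(\<lambda>x. a * u x + b * v x) \<in> borel_measurable lborel" by measurable
    show ?thesis
      using G_A[OF p Df_meas_Ms[OF um, of p s] Df_meas_Ms[OF vm, of p s], of a b] uf vf
      unfolding sn_def Rfs[OF s' p um] Rfs[OF s' p vm] Rfs[OF s' p lm] Df_lin by simp
  next
    case 3
    obtain g h where g: "has_weak_grad u g" and h: "has_weak_grad v h"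
      using fin1 uf vf 3 by blast
    note gh = hwg_lin[OF g h, of a b]
    show ?thesis
      using G_A[OF p hwg_meas[OF g] hwg_meas[OF h], of a b] uf vf
      unfolding sn_def 3 R1s[OF g] R1s[OF h] R1s[OF gh] by simp
  qed
qed

lemma S_B:
  fixes u v :: "'a::euclidean_space \<Rightarrow> real"
  assumes p: "1 < p" and s: "0 \<le> s" "s \<le> 1"
    and um[measurable]: "u \<in> borel_measurable lborel" and vm[measurable]: "v \<in> borel_measurable lborel"
    and uf: "seminorm_pow p s u < \<infinity>" and vf: "seminorm_pow p s v < \<infinity>"
  shows "\<bar>pairing p s u v\<bar> \<le> sn p s u powr ((p - 1) / p) * sn p s v powr (1 / p)"
proof -
  consider "s = 0" | "0 < s \<and> s < 1" | "s = 1" using s by linarith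
  then show ?thesis
  proof cases
    case 1
    show ?thesis using G_B[OF p um vm] uf vf unfolding 1 R0 sn_def by simp
  next
    case 2
    then have s': "0 < s" "s < 1" by auto
    show ?thesis
      using G_B[OF p Df_meas_Ms[OF um, of p s] Df_meas_Ms[OF vm, of p s]] uf vf
      unfolding sn_def Rfs[OF s' p um] Rfs[OF s' p vm] Rfp[OF s' p um vm] by simp
  next
    case 3
    obtain g h where g: "has_weak_grad u g" and h: "has_weak_grad v h"
      using fin1 uf vf 3 by blast
    show ?thesis
      using G_B[OF p hwg_meas[OF g] hwg_meas[OF h]] uf vf
      unfolding sn_def 3 R1s[OF g] R1s[OF h] R1p[OF g h] by simp
  qed
qed

lemma S_C:
  fixes u v w :: "'a::euclidean_space \<Rightarrow> real"
  assumes p: "1 < p" and s: "0 \<le> s" "s \<le> 1"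
    and um[measurable]: "u \<in> borel_measurable lborel" and vm[measurable]: "v \<in> borel_measurable lborel"
    and wm[measurable]: "w \<in> borel_measurable lborel"
    and uf: "seminorm_pow p s u < \<infinity>" and vf: "seminorm_pow p s v < \<infinity>" and wf: "seminorm_pow p s w < \<infinity>"
  shows "pairing p s u (\<lambda>x. a * v x + b * w x) = a * pairing p s u v + b * pairing p s u w"
proof -
  consider "s = 0" | "0 < s \<and> s < 1" | "s = 1" using s by linarith
  then show ?thesis
  proof cases
    case 1
    show ?thesis using G_C[OF p um vm wm, of a b] uf vf wf unfolding 1 R0 real_lin by simp
  next
    case 2
    then have s': "0 < s" "s < 1" by auto
    have lm: "(\<lambda>x. a * v x + b * w x) \<in> borel_measurable lborel" by measurable
    show ?thesis
      using G_C[OF p Df_meas_Ms[OF um, of p s] Df_meas_Ms[OF vm, of p s] Df_meas_Ms[OF wm, of p s], of a b] uf vf wf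
      unfolding Rfs[OF s' p um] Rfs[OF s' p vm] Rfs[OF s' p wm] Rfp[OF s' p um lm] Rfp[OF s' p um vm] Rfp[OF s' p um wm] Df_lin
      by simp
  next
    case 3
    obtain g h k where g: "has_weak_grad u g" and h: "has_weak_grad v h" and k: "has_weak_grad w k"
      using fin1 uf vf wf 3 by blast
    note hk = hwg_lin[OF h k, of a b]
    show ?thesis
      using G_C[OF p hwg_meas[OF g] hwg_meas[OF h] hwg_meas[OF k], of a b] uf vf wf
      unfolding 3 R1s[OF g] R1s[OF h] R1s[OF k] R1p[OF g h] R1p[OF g k] R1p[OF g hk] by simp
  qed
qed

lemma S_D:
  fixes u v w :: "'a::euclidean_space \<Rightarrow> real"
  assumes p: "1 < p" and s: "0 \<le> s" "s \<le> 1"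
    and um[measurable]: "u \<in> borel_measurable lborel" and vm[measurable]: "v \<in> borel_measurable lborel"
    and wm[measurable]: "w \<in> borel_measurable lborel"
    and uf: "seminorm_pow p s u < \<infinity>" and vf: "seminorm_pow p s v < \<infinity>" and wf: "seminorm_pow p s w < \<infinity>"
    and C: "0 \<le> C" "0 \<le> \<eta>"
    and ineq1: "\<And>a b::real. norm (Phi p a - Phi p b) powr (p / (p - 1))
            \<le> C * norm (a - b) powr p + \<eta> * (norm a powr p + norm b powr p)"
    and ineq2: "\<And>a b::'a. norm (Phi p a - Phi p b) powr (p / (p - 1))
            \<le> C * norm (a - b) powr p + \<eta> * (norm a powr p + norm b powr p)"
  shows "\<bar>pairing p s w v - pairing p s u v\<bar> \<le>
     (C * sn p s (\<lambda>x. w x - u x) + \<eta> * (sn p s w + sn p s u)) powr ((p - 1) / p) * sn p s v powr (1 / p)"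
proof -
  consider "s = 0" | "0 < s \<and> s < 1" | "s = 1" using s by linarith
  then show ?thesis
  proof cases
    case 1
    show ?thesis using G_D[OF p wm um vm _ _ _ C ineq1] uf vf wf unfolding 1 R0 sn_def by simp
  next
    case 2
    then have s': "0 < s" "s < 1" by auto
    have lm: "(\<lambda>x. w x - u x) \<in> borel_measurable lborel" by measurable
    show ?thesis
      using G_D[OF p Df_meas_Ms[OF wm, of p s] Df_meas_Ms[OF um, of p s] Df_meas_Ms[OF vm, of p s] _ _ _ C ineq1] uf vf wf
      unfolding sn_def Rfs[OF s' p um] Rfs[OF s' p vm] Rfs[OF s' p wm] Rfs[OF s' p lm]
        Rfp[OF s' p um vm] Rfp[OF s' p wm vm] Df_diff
      by simp
  next
    case 3
    obtain g h k where g: "has_weak_grad u g" and h: "has_weak_grad v h" and k: "has_weak_grad w k"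
      using fin1 uf vf wf 3 by blast
    note kg = hwg_diff[OF k g]
    show ?thesis
      using G_D[OF p hwg_meas[OF k] hwg_meas[OF g] hwg_meas[OF h] _ _ _ C ineq2] uf vf wf
      unfolding sn_def 3 R1s[OF g] R1s[OF h] R1s[OF k] R1s[OF kg] R1p[OF g h] R1p[OF k h] by simp
  qed
qed

lemma Gamma_meas[measurable]: "f \<in> borel_measurable M \<Longrightarrow> (\<lambda>x. Gamma (f x :: real)) \<in> borel_measurable M"
  unfolding Gamma_def
  by (intro borel_measurable_inverse borel_measurable_continuous_on[OF continuous_on_rGamma])

lemma cNsp_meas[measurable]: "(\<lambda>s. cNsp N s p) \<in> borel_measurable borel"
  unfolding cNsp_def by measurable

lemma sf: "sigma_finite_measure (lborel \<Otimes>\<^sub>M (lborel::'a::euclidean_space measure))"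
  by (simp add: lborel.sigma_finite_measure_axioms sigma_finite_pair_measure)

lemma M1:
  fixes u :: "'a::euclidean_space \<Rightarrow> real"
  assumes um[measurable]: "u \<in> borel_measurable lborel"
  shows "(\<lambda>s. seminorm_pow p s u) \<in> borel_measurable borel"
proof -
  have "(\<lambda>s. \<integral>\<^sup>+ z. ennreal (\<bar>u (fst z) - u (snd z)\<bar> powr p
                       / norm (fst z - snd z) powr (real DIM('a) + s * p)) \<partial>(lborel \<Otimes>\<^sub>M lborel)) \<in> borel_measurable borel"
    by (rule sigma_finite_measure.borel_measurable_nn_integral[OF sf]) measurable
  then show ?thesis unfolding seminorm_pow_def by measurable
qed

lemma M2:
  fixes u v :: "'a::euclidean_space \<Rightarrow> real"
  assumes um[measurable]: "u \<in> borel_measurable lborel" and vm[measurable]: "v \<in> borel_measurable lborel"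
  shows "(\<lambda>s. pairing p s u v) \<in> borel_measurable borel"
proof -
  have "(\<lambda>s. \<integral>z. \<bar>u (fst z) - u (snd z)\<bar> powr (p - 2) * (u (fst z) - u (snd z)) * (v (fst z) - v (snd z))
              / norm (fst z - snd z) powr (real DIM('a) + s * p) \<partial>(lborel \<Otimes>\<^sub>M lborel)) \<in> borel_measurable borel"
    by (rule sigma_finite_measure.borel_measurable_lebesgue_integral[OF sf]) measurable
  then show ?thesis unfolding pairing_def by measurable
qed

lemma muH:
  fixes A B h :: "'x \<Rightarrow> real"
  assumes p: "1 < p" and Am: "A \<in> borel_measurable M" and Bm: "B \<in> borel_measurable M" and hm: "h \<in> borel_measurable M"
    and A0: "\<And>s. 0 \<le> A s" and B0: "\<And>s. 0 \<le> B s"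
    and Ai: "integrable M A" and Bi: "integrable M B"
    and hb: "AE s in M. \<bar>h s\<bar> \<le> A s powr ((p - 1) / p) * B s powr (1 / p)"
  shows "integrable M h \<and> \<bar>\<integral>s. h s \<partial>M\<bar> \<le> (\<integral>s. A s \<partial>M) powr ((p - 1) / p) * (\<integral>s. B s \<partial>M) powr (1 / p)"
proof -
  have pq: "1 < p / (p - 1)" "1 / (p / (p - 1)) + 1 / p = 1" using p by (auto simp: field_simps)
  have e1: "(A s powr ((p - 1) / p)) powr (p / (p - 1)) = A s" for s
    using p A0[of s] by (simp add: powr_powr)
  have e2: "(B s powr (1 / p)) powr p = B s" for s
    using p B0[of s] by (simp add: powr_powr)
  have H: "integrable M (\<lambda>s. A s powr ((p - 1) / p) * B s powr (1 / p)) \<and>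
     (\<integral>s. A s powr ((p - 1) / p) * B s powr (1 / p) \<partial>M) \<le>
       (\<integral>s. (A s powr ((p - 1) / p)) powr (p / (p - 1)) \<partial>M) powr (1 / (p / (p - 1))) *
       (\<integral>s. (B s powr (1 / p)) powr p \<partial>M) powr (1 / p)"
    by (rule holder_real[OF pq(1) p pq(2)]) (use Am Bm Ai Bi in \<open>auto simp: e1 e2\<close>)
  have hi: "integrable M h"
    by (rule Bochner_Integration.integrable_bound[of _ "\<lambda>s. A s powr ((p - 1) / p) * B s powr (1 / p)"])
       (use H hm hb in auto)
  have "\<bar>\<integral>s. h s \<partial>M\<bar> \<le> (\<integral>s. \<bar>h s\<bar> \<partial>M)" by (rule integral_abs_bound)
  also have "\<dots> \<le> (\<integral>s. A s powr ((p - 1) / p) * B s powr (1 / p) \<partial>M)"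
    using hi H hb by (intro integral_mono_AE) auto
  also have "\<dots> \<le> (\<integral>s. A s \<partial>M) powr ((p - 1) / p) * (\<integral>s. B s \<partial>M) powr (1 / p)"
    using H p by (simp add: e1 e2)
  finally show ?thesis using hi by simp
qed

lemma mu_meas:
  assumes ms: "sets mu = sets (restrict_space borel {0..1::real})"
    and f: "f \<in> borel_measurable borel"
  shows "f \<in> borel_measurable mu"
  unfolding measurable_cong_sets[OF ms refl] by (rule measurable_restrict_space1[OF f])

lemma mu_AE01:
  assumes ms: "sets mu = sets (restrict_space borel {0..1::real})"
  shows "AE s in mu. 0 \<le> s \<and> s \<le> 1"
proof -
  have "space mu = {0..1}" using sets_eq_imp_space_eq[OF ms] by (simp add: space_restrict_space)
  then show ?thesis by (intro AE_I2) auto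
qed

lemma sn_meas:
  assumes ms: "sets mu = sets (restrict_space borel {0..1::real})"
    and um: "u \<in> borel_measurable lborel"
  shows "(\<lambda>s. seminorm_pow p s u) \<in> borel_measurable mu" "(\<lambda>s. sn p s u) \<in> borel_measurable mu"
proof -
  show m: "(\<lambda>s. seminorm_pow p s u) \<in> borel_measurable mu" by (rule mu_meas[OF ms M1[OF um]])
  show "(\<lambda>s. sn p s u) \<in> borel_measurable mu" unfolding sn_def using m by measurable
qed

lemma sn_nonneg: "0 \<le> sn p s u" by (simp add: sn_def)

lemma Xfin:
  assumes ms: "sets mu = sets (restrict_space borel {0..1::real})"
    and um: "u \<in> borel_measurable lborel" and uf: "rho_pow mu p u < \<infinity>"
  shows "AE s in mu. seminorm_pow p s u < \<infinity>" "integrable mu (\<lambda>s. sn p s u)"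
    "enn2real (rho_pow mu p u) = (\<integral>s. sn p s u \<partial>mu)"
proof -
  note m = sn_meas[OF ms um, of p]
  have "AE s in mu. seminorm_pow p s u \<noteq> \<infinity>"
    by (rule nn_integral_PInf_AE[OF m(1)]) (use uf in \<open>auto simp: rho_pow_def\<close>)
  then show ae: "AE s in mu. seminorm_pow p s u < \<infinity>" by (simp add: less_top)
  have eq: "(\<integral>\<^sup>+ s. ennreal (sn p s u) \<partial>mu) = rho_pow mu p u"
    unfolding rho_pow_def sn_def using ae
    by (intro nn_integral_cong_AE) (auto elim!: eventually_mono simp: less_top)
  show i: "integrable mu (\<lambda>s. sn p s u)"
    by (rule integrableI_nonneg) (use m eq uf in \<open>auto simp: sn_nonneg\<close>)
  have "rho_pow mu p u = ennreal (\<integral>s. sn p s u \<partial>mu)"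
    using nn_integral_eq_integral[OF i] eq by (simp add: sn_nonneg)
  then show "enn2real (rho_pow mu p u) = (\<integral>s. sn p s u \<partial>mu)"
    by (simp add: integral_nonneg_AE sn_nonneg)
qed

lemma Xlin:
  fixes u v :: "'a::euclidean_space \<Rightarrow> real"
  assumes ms: "sets mu = sets (restrict_space borel {0..1::real})" and p: "1 < p"
    and um[measurable]: "u \<in> borel_measurable lborel" and uf: "rho_pow mu p u < \<infinity>"
    and vm[measurable]: "v \<in> borel_measurable lborel" and vf: "rho_pow mu p v < \<infinity>"
  shows "rho_pow mu p (\<lambda>x. a * u x + b * v x) < \<infinity>"
    "(\<integral>s. sn p s (\<lambda>x. a * u x + b * v x) \<partial>mu) \<le>
       2 powr p * (\<bar>a\<bar> powr p * (\<integral>s. sn p s u \<partial>mu) + \<bar>b\<bar> powr p * (\<integral>s. sn p s v \<partial>mu))"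
proof -
  have lm: "(\<lambda>x. a * u x + b * v x) \<in> borel_measurable lborel" by measurable
  note fu = Xfin[OF ms um uf] and fv = Xfin[OF ms vm vf]
  have ae: "AE s in mu. seminorm_pow p s (\<lambda>x. a * u x + b * v x) < \<infinity> \<and>
    sn p s (\<lambda>x. a * u x + b * v x) \<le> 2 powr p * (\<bar>a\<bar> powr p * sn p s u + \<bar>b\<bar> powr p * sn p s v)"
    using mu_AE01[OF ms] fu(1) fv(1)
    by eventually_elim (rule S_A[OF p _ _ um vm], auto)
  have Ri: "integrable mu (\<lambda>s. 2 powr p * (\<bar>a\<bar> powr p * sn p s u + \<bar>b\<bar> powr p * sn p s v))"
    using fu(2) fv(2) by auto
  have "rho_pow mu p (\<lambda>x. a * u x + b * v x) = (\<integral>\<^sup>+ s. ennreal (sn p s (\<lambda>x. a * u x + b * v x)) \<partial>mu)"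
    unfolding rho_pow_def sn_def using ae
    by (intro nn_integral_cong_AE) (auto elim!: eventually_mono simp: less_top)
  also have "\<dots> \<le> (\<integral>\<^sup>+ s. ennreal (2 powr p * (\<bar>a\<bar> powr p * sn p s u + \<bar>b\<bar> powr p * sn p s v)) \<partial>mu)"
    by (intro nn_integral_mono_AE, rule eventually_mono[OF ae]) (auto intro: ennreal_leI)
  also have "\<dots> = ennreal (\<integral>s. 2 powr p * (\<bar>a\<bar> powr p * sn p s u + \<bar>b\<bar> powr p * sn p s v) \<partial>mu)"
    by (rule nn_integral_eq_integral[OF Ri]) (auto simp: sn_nonneg)
  also have "\<dots> < \<infinity>" by simp
  finally show fin: "rho_pow mu p (\<lambda>x. a * u x + b * v x) < \<infinity>" .
  note fl = Xfin[OF ms lm fin]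
  have "(\<integral>s. sn p s (\<lambda>x. a * u x + b * v x) \<partial>mu) \<le>
     (\<integral>s. 2 powr p * (\<bar>a\<bar> powr p * sn p s u + \<bar>b\<bar> powr p * sn p s v) \<partial>mu)"
    using ae fl(2) Ri by (intro integral_mono_AE) (auto elim!: eventually_mono)
  also have "\<dots> = 2 powr p * (\<bar>a\<bar> powr p * (\<integral>s. sn p s u \<partial>mu) + \<bar>b\<bar> powr p * (\<integral>s. sn p s v \<partial>mu))"
    using fu(2) fv(2) by simp
  finally show "(\<integral>s. sn p s (\<lambda>x. a * u x + b * v x) \<partial>mu) \<le>
       2 powr p * (\<bar>a\<bar> powr p * (\<integral>s. sn p s u \<partial>mu) + \<bar>b\<bar> powr p * (\<integral>s. sn p s v \<partial>mu))" .
qed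

lemma Xpair:
  fixes u v :: "'a::euclidean_space \<Rightarrow> real"
  assumes ms: "sets mu = sets (restrict_space borel {0..1::real})" and p: "1 < p"
    and um[measurable]: "u \<in> borel_measurable lborel" and uf: "rho_pow mu p u < \<infinity>"
    and vm[measurable]: "v \<in> borel_measurable lborel" and vf: "rho_pow mu p v < \<infinity>"
  shows "integrable mu (\<lambda>s. pairing p s u v)"
    "\<bar>Ap mu p u v\<bar> \<le> (\<integral>s. sn p s u \<partial>mu) powr ((p - 1) / p) * (\<integral>s. sn p s v \<partial>mu) powr (1 / p)"
proof -
  note fu = Xfin[OF ms um uf] and fv = Xfin[OF ms vm vf]
  have hb: "AE s in mu. \<bar>pairing p s u v\<bar> \<le> sn p s u powr ((p - 1) / p) * sn p s v powr (1 / p)"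
    using mu_AE01[OF ms] fu(1) fv(1)
    by eventually_elim (rule S_B[OF p _ _ um vm], auto)
  note H = muH[OF p sn_meas(2)[OF ms um] sn_meas(2)[OF ms vm] mu_meas[OF ms M2[OF um vm]] sn_nonneg sn_nonneg fu(2) fv(2) hb]
  then show "integrable mu (\<lambda>s. pairing p s u v)"
    "\<bar>Ap mu p u v\<bar> \<le> (\<integral>s. sn p s u \<partial>mu) powr ((p - 1) / p) * (\<integral>s. sn p s v \<partial>mu) powr (1 / p)"
    by (auto simp: Ap_def)
qed

lemma Xp_mem: "u \<in> Xp mu p \<Omega> \<Longrightarrow> u \<in> borel_measurable lborel \<and> rho_pow mu p u < \<infinity>"
  by (simp add: Xp_def)

theorem lemma5p1:
  fixes \<Omega> :: "'a::euclidean_space set" and p :: real and mu :: "real measure"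
  assumes "1 < p" "p < real DIM('a)"
    and "open \<Omega>" "bounded \<Omega>"
    and "sets mu = sets (restrict_space borel {0..1::real})"
    and "finite_measure mu"
    and "\<exists>sb. 0 < sb \<and> sb \<le> 1 \<and> emeasure mu {sb..1} > 0"
  shows "(\<forall>u\<in>Xp mu p \<Omega>. \<forall>v\<in>Xp mu p \<Omega>. \<forall>w\<in>Xp mu p \<Omega>. \<forall>a b::real.
            Ap mu p u (\<lambda>x. a * v x + b * w x) = a * Ap mu p u v + b * Ap mu p u w)
       \<and> (\<forall>u\<in>Xp mu p \<Omega>. \<exists>C. \<forall>v\<in>Xp mu p \<Omega>. \<bar>Ap mu p u v\<bar> \<le> C * rho mu p v)
       \<and> (\<forall>u\<in>Xp mu p \<Omega>. \<forall>\<epsilon>>0. \<exists>\<delta>>0. \<forall>w\<in>Xp mu p \<Omega>.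
            rho mu p (\<lambda>x. w x - u x) < \<delta> \<longrightarrow>
            (\<forall>v\<in>Xp mu p \<Omega>. \<bar>Ap mu p w v - Ap mu p u v\<bar> \<le> \<epsilon> * rho mu p v))"
proof (intro conjI ballI allI impI)
  have p: "1 < p" using assms(1) .
  have ms: "sets mu = sets (restrict_space borel {0..1::real})" using assms(5) .
  have rhoeq: "rho mu p u = (\<integral>s. sn p s u \<partial>mu) powr (1 / p)"
    if "u \<in> borel_measurable lborel" "rho_pow mu p u < \<infinity>" for u :: "'a \<Rightarrow> real"
    using Xfin(3)[OF ms that] by (simp add: rho_def)
  {
    fix u v w :: "'a \<Rightarrow> real" and a b :: real
    assume u: "u \<in> Xp mu p \<Omega>" and v: "v \<in> Xp mu p \<Omega>" and w: "w \<in> Xp mu p \<Omega>"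
    note um = Xp_mem[OF u] and vm = Xp_mem[OF v] and wm = Xp_mem[OF w]
    have [measurable]: "v \<in> borel_measurable lborel" "w \<in> borel_measurable lborel" using vm wm by auto
    have lm: "(\<lambda>x. a * v x + b * w x) \<in> borel_measurable lborel" by measurable
    have "Ap mu p u (\<lambda>x. a * v x + b * w x) = (\<integral>s. a * pairing p s u v + b * pairing p s u w \<partial>mu)"
      unfolding Ap_def
    proof (rule integral_cong_AE)
      show "(\<lambda>s. pairing p s u (\<lambda>x. a * v x + b * w x)) \<in> borel_measurable mu"
        by (rule mu_meas[OF ms M2[OF conjunct1[OF um] lm]])
      have [measurable]: "(\<lambda>s. pairing p s u v) \<in> borel_measurable mu" "(\<lambda>s. pairing p s u w) \<in> borel_measurable mu"
        using mu_meas[OF ms M2[OF conjunct1[OF um] conjunct1[OF vm]]] mu_meas[OF ms M2[OF conjunct1[OF um] conjunct1[OF wm]]]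
        by auto
      show "(\<lambda>s. a * pairing p s u v + b * pairing p s u w) \<in> borel_measurable mu"
        by measurable
      show "AE s in mu. pairing p s u (\<lambda>x. a * v x + b * w x) = a * pairing p s u v + b * pairing p s u w"
        using mu_AE01[OF ms] Xfin(1)[OF ms conjunct1[OF um] conjunct2[OF um]]
          Xfin(1)[OF ms conjunct1[OF vm] conjunct2[OF vm]] Xfin(1)[OF ms conjunct1[OF wm] conjunct2[OF wm]]
        by eventually_elim (rule S_C[OF p _ _ conjunct1[OF um] conjunct1[OF vm] conjunct1[OF wm]], auto)
    qed
    also have "\<dots> = a * Ap mu p u v + b * Ap mu p u w"
      using Xpair(1)[OF ms p conjunct1[OF um] conjunct2[OF um] conjunct1[OF vm] conjunct2[OF vm]]
        Xpair(1)[OF ms p conjunct1[OF um] conjunct2[OF um] conjunct1[OF wm] conjunct2[OF wm]]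
      by (simp add: Ap_def)
    finally show "Ap mu p u (\<lambda>x. a * v x + b * w x) = a * Ap mu p u v + b * Ap mu p u w" .
  }
  {
    fix u :: "'a \<Rightarrow> real" assume u: "u \<in> Xp mu p \<Omega>"
    note um = Xp_mem[OF u]
    show "\<exists>C. \<forall>v\<in>Xp mu p \<Omega>. \<bar>Ap mu p u v\<bar> \<le> C * rho mu p v"
    proof (intro exI ballI)
      fix v assume v: "v \<in> Xp mu p \<Omega>"
      note vm = Xp_mem[OF v]
      show "\<bar>Ap mu p u v\<bar> \<le> (\<integral>s. sn p s u \<partial>mu) powr ((p - 1) / p) * rho mu p v"
        using Xpair(2)[OF ms p conjunct1[OF um] conjunct2[OF um] conjunct1[OF vm] conjunct2[OF vm]]
          rhoeq[OF conjunct1[OF vm] conjunct2[OF vm]] by simp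
    qed
  }
  {
    fix u :: "'a \<Rightarrow> real" and \<epsilon> :: real assume u: "u \<in> Xp mu p \<Omega>" and epos: "0 < \<epsilon>"
    note um = Xp_mem[OF u]
    define R where "R = (\<integral>s. sn p s u \<partial>mu)"
    have R0: "0 \<le> R" unfolding R_def by (intro integral_nonneg_AE) (simp add: sn_nonneg)
    define T where "T = \<epsilon> powr (p / (p - 1))"
    have Tpos: "0 < T" using epos by (simp add: T_def)
    define X where "X = 2 powr p * (1 + R) + R"
    have X0: "0 \<le> X" using R0 by (simp add: X_def)
    define \<eta> where "\<eta> = T / (2 * (X + 1))"
    have etapos: "0 < \<eta>" using Tpos X0 by (simp add: \<eta>_def)
    have etaX: "\<eta> * X \<le> T / 2"
    proof -
      have "\<eta> * X = T * X / (2 * (X + 1))" by (simp add: \<eta>_def)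
      also have "\<dots> \<le> T * (X + 1) / (2 * (X + 1))"
        using Tpos X0 by (intro divide_right_mono mult_left_mono) auto
      also have "\<dots> = T / 2"
      proof -
        have "X + 1 \<noteq> 0" using X0 by linarith
        then show ?thesis by (simp add: field_simps)
      qed
      finally show ?thesis .
    qed
    obtain C1 where C1: "C1 \<ge> 0" "\<And>a b::real. norm (Phi p a - Phi p b) powr (p / (p - 1))
            \<le> C1 * norm (a - b) powr p + \<eta> * (norm a powr p + norm b powr p)"
      using Phi_diff_ineq[OF p etapos] by blast
    obtain C2 where C2: "C2 \<ge> 0" "\<And>a b::'a. norm (Phi p a - Phi p b) powr (p / (p - 1))
            \<le> C2 * norm (a - b) powr p + \<eta> * (norm a powr p + norm b powr p)"
      using Phi_diff_ineq[OF p etapos] by blast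
    define C where "C = max C1 C2"
    have C0: "0 \<le> C" using C1 by (simp add: C_def)
    have ineq1: "norm (Phi p a - Phi p b) powr (p / (p - 1))
            \<le> C * norm (a - b) powr p + \<eta> * (norm a powr p + norm b powr p)" for a b :: real
    proof -
      have "C1 * norm (a - b) powr p \<le> C * norm (a - b) powr p"
        by (intro mult_right_mono) (auto simp: C_def)
      then show ?thesis using C1(2)[of a b] by linarith
    qed
    have ineq2: "norm (Phi p a - Phi p b) powr (p / (p - 1))
            \<le> C * norm (a - b) powr p + \<eta> * (norm a powr p + norm b powr p)" for a b :: 'a
    proof -
      have "C2 * norm (a - b) powr p \<le> C * norm (a - b) powr p"
        by (intro mult_right_mono) (auto simp: C_def)
      then show ?thesis using C2(2)[of a b] by linarith
    qed
    define K where "K = T / (2 * (C + 1))"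
    have Kpos: "0 < K" using Tpos C0 by (simp add: K_def)
    define \<delta> where "\<delta> = min 1 (K powr (1 / p))"
    have dpos: "0 < \<delta>" using Kpos by (simp add: \<delta>_def)
    show "\<exists>\<delta>>0. \<forall>w\<in>Xp mu p \<Omega>. rho mu p (\<lambda>x. w x - u x) < \<delta> \<longrightarrow>
            (\<forall>v\<in>Xp mu p \<Omega>. \<bar>Ap mu p w v - Ap mu p u v\<bar> \<le> \<epsilon> * rho mu p v)"
    proof (intro exI conjI ballI impI)
      show "0 < \<delta>" by (rule dpos)
      fix w v assume w: "w \<in> Xp mu p \<Omega>" and dl: "rho mu p (\<lambda>x. w x - u x) < \<delta>" and v: "v \<in> Xp mu p \<Omega>"
      note wm = Xp_mem[OF w] and vm = Xp_mem[OF v]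
      define d where "d = (\<lambda>x. w x - u x)"
      have [measurable]: "u \<in> borel_measurable lborel" "w \<in> borel_measurable lborel" using um wm by auto
      have dm: "d \<in> borel_measurable lborel" unfolding d_def by measurable
      have d_eq: "d = (\<lambda>x. 1 * w x + (- 1) * u x)" by (simp add: d_def)
      have df: "rho_pow mu p d < \<infinity>"
        unfolding d_eq by (rule Xlin(1)[OF ms p conjunct1[OF wm] conjunct2[OF wm] conjunct1[OF um] conjunct2[OF um]])
      define D where "D = (\<integral>s. sn p s d \<partial>mu)"
      have D0: "0 \<le> D" unfolding D_def by (intro integral_nonneg_AE) (simp add: sn_nonneg)
      have "D powr (1 / p) < \<delta>" using dl rhoeq[OF dm df] by (simp add: D_def d_def)
      then have "(D powr (1 / p)) powr p < \<delta> powr p"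
        using p D0 by (intro powr_less_mono2) auto
      then have Dd: "D < \<delta> powr p" using p D0 by (simp add: powr_powr)
      have "\<delta> powr p \<le> (K powr (1 / p)) powr p" using p dpos by (intro powr_mono2) (auto simp: \<delta>_def)
      then have DK: "D \<le> K" using Dd p Kpos by (simp add: powr_powr)
      have "\<delta> powr p \<le> 1 powr p" using p dpos by (intro powr_mono2) (auto simp: \<delta>_def)
      then have D1: "D \<le> 1" using Dd by simp
      have w_eq: "(\<lambda>x. d x + u x) = w" by (simp add: d_def)
      have W: "(\<integral>s. sn p s w \<partial>mu) \<le> 2 powr p * (D + R)"
        using Xlin(2)[OF ms p dm df conjunct1[OF um] conjunct2[OF um], of 1 1]
        by (simp add: w_eq D_def R_def)
      note fu = Xfin[OF ms conjunct1[OF um] conjunct2[OF um]] and fv = Xfin[OF ms conjunct1[OF vm] conjunct2[OF vm]]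
        and fw = Xfin[OF ms conjunct1[OF wm] conjunct2[OF wm]] and fd = Xfin[OF ms dm df]
      define E where "E s = C * sn p s d + \<eta> * (sn p s w + sn p s u)" for s
      have E0: "0 \<le> E s" for s unfolding E_def using C0 etapos by (auto intro!: add_nonneg_nonneg mult_nonneg_nonneg sn_nonneg)
      have [measurable]: "(\<lambda>s. sn p s d) \<in> borel_measurable mu" "(\<lambda>s. sn p s w) \<in> borel_measurable mu"
          "(\<lambda>s. sn p s u) \<in> borel_measurable mu"
        using sn_meas(2)[OF ms dm] sn_meas(2)[OF ms conjunct1[OF wm]] sn_meas(2)[OF ms conjunct1[OF um]] by auto
      have Em: "E \<in> borel_measurable mu"
        unfolding E_def by measurable
      have Ei: "integrable mu E" unfolding E_def using fd(2) fw(2) fu(2) by auto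
      have [measurable]: "(\<lambda>s. pairing p s w v) \<in> borel_measurable mu" "(\<lambda>s. pairing p s u v) \<in> borel_measurable mu"
        using mu_meas[OF ms M2[OF conjunct1[OF wm] conjunct1[OF vm]]] mu_meas[OF ms M2[OF conjunct1[OF um] conjunct1[OF vm]]]
        by auto
      have hm: "(\<lambda>s. pairing p s w v - pairing p s u v) \<in> borel_measurable mu"
        by measurable
      have hb: "AE s in mu. \<bar>pairing p s w v - pairing p s u v\<bar> \<le> E s powr ((p - 1) / p) * sn p s v powr (1 / p)"
        using mu_AE01[OF ms] fu(1) fv(1) fw(1)
        unfolding E_def d_def
        by eventually_elim (rule S_D[OF p _ _ conjunct1[OF um] conjunct1[OF vm] conjunct1[OF wm] _ _ _ C0 _ ineq1 ineq2], auto simp: etapos less_imp_le)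
      note H = muH[OF p Em sn_meas(2)[OF ms conjunct1[OF vm]] hm E0 sn_nonneg Ei fv(2) hb]
      have "(\<integral>s. pairing p s w v - pairing p s u v \<partial>mu) = Ap mu p w v - Ap mu p u v"
        using Xpair(1)[OF ms p conjunct1[OF wm] conjunct2[OF wm] conjunct1[OF vm] conjunct2[OF vm]]
          Xpair(1)[OF ms p conjunct1[OF um] conjunct2[OF um] conjunct1[OF vm] conjunct2[OF vm]]
        by (simp add: Ap_def)
      then have B1: "\<bar>Ap mu p w v - Ap mu p u v\<bar> \<le> (\<integral>s. E s \<partial>mu) powr ((p - 1) / p) * (\<integral>s. sn p s v \<partial>mu) powr (1 / p)"
        using H by simp
      have "(\<integral>s. E s \<partial>mu) = C * D + \<eta> * ((\<integral>s. sn p s w \<partial>mu) + R)"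
        unfolding E_def D_def R_def using fd(2) fw(2) fu(2) by simp
      also have "\<dots> \<le> C * K + \<eta> * X"
      proof (rule add_mono)
        show "C * D \<le> C * K" using DK C0 by (intro mult_left_mono) auto
        have "(\<integral>s. sn p s w \<partial>mu) + R \<le> 2 powr p * (D + R) + R" using W by simp
        also have "\<dots> \<le> X" unfolding X_def using D1 by (intro add_mono mult_left_mono) auto
        finally show "\<eta> * ((\<integral>s. sn p s w \<partial>mu) + R) \<le> \<eta> * X" using etapos by (intro mult_left_mono) auto
      qed
      also have "C * K \<le> T / 2"
      proof -
        have "C * K = T * C / (2 * (C + 1))" by (simp add: K_def)
        also have "\<dots> \<le> T * (C + 1) / (2 * (C + 1))"
          using Tpos C0 by (intro divide_right_mono mult_left_mono) auto
        also have "\<dots> = T / 2"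
        proof -
          have "C + 1 \<noteq> 0" using C0 by linarith
          then show ?thesis by (simp add: field_simps)
        qed
        finally show ?thesis .
      qed
      then have "C * K + \<eta> * X \<le> T" using etaX by linarith
      finally have IE: "(\<integral>s. E s \<partial>mu) \<le> T" .
      have IE0: "0 \<le> (\<integral>s. E s \<partial>mu)" by (intro integral_nonneg_AE) (simp add: E0)
      have "(\<integral>s. E s \<partial>mu) powr ((p - 1) / p) \<le> T powr ((p - 1) / p)"
        using IE IE0 p by (intro powr_mono2) auto
      also have "\<dots> = \<epsilon>" using p epos by (simp add: T_def powr_powr)
      finally have EP: "(\<integral>s. E s \<partial>mu) powr ((p - 1) / p) \<le> \<epsilon>" .
      have "\<bar>Ap mu p w v - Ap mu p u v\<bar> \<le> \<epsilon> * (\<integral>s. sn p s v \<partial>mu) powr (1 / p)"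
        using B1 EP by (meson mult_right_mono order_trans powr_ge_zero)
      then show "\<bar>Ap mu p w v - Ap mu p u v\<bar> \<le> \<epsilon> * rho mu p v"
        using rhoeq[OF conjunct1[OF vm] conjunct2[OF vm]] by simp
    qed
  }
qed


end
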